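(* Let $H$ be a weak Hopf algebra, $A$ an algebra and $\pi\colon H\to A$ a linear map satisfying (PR1)–(PR5). Then the following are equivalent: (1) $\pi(h)=\pi(h_1)\pi(S(h_2))\pi(h_3)$ for all $h\in H$; (2) $\pi(1_1)\pi(S(1_2))=1_A$; (3) $\pi(S(1_1))\pi(1_2)=1_A$; (4) $\pi(S(h))=\pi(S(h_1))\pi(h_2)\pi(S(h_3))$ for all $h\in H$. Moreover, if the antipode $S$ is invertible, these are also equivalent to each of: (5) $\pi(h)=\pi(h_3)\pi(S^{-1}(h_2))\pi(h_1)$ for all $h\in H$; (6) $\pi(S^{-1}(1_2))\pi(1_1)=1_A$; (7) $\pi(1_2)\pi(S^{-1}(1_1))=1_A$.
   Context: All algebras are associative and unital over a field $\Bbbk$; Sweedler notation $\Delta(h)=h_1\otimes h_2$, $\Delta(1_H)=1_1\otimes1_2$. A weak Hopf algebra is $(H,m,u,\Delta,\varepsilon,S)$ with $H$ an algebra, $(H,\Delta,\varepsilon)$ a coalgebra, and for all $g,h,k$: $\Delta(kh)=\Delta(k)\Delta(h)$; $\varepsilon(kh_1)\varepsilon(h_2g)=\varepsilon(khg)=\varepsilon(kh_2)\varepsilon(h_1g)$; $(1\otimes\Delta(1))(\Delta(1)\otimes1)=\Delta^2(1)=(\Delta(1)\otimes1)(1\otimes\Delta(1))$; $h_1S(h_2)=\varepsilon(1_1h)1_2$; $S(h_1)h_2=1_1\varepsilon(h1_2)$; $S(h)=S(h_1)h_2S(h_3)$. Conditions, for all $h,k\in H$: (PR1) $\pi(1_H)=1_A$;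 (PR2) $\pi(h)\pi(k_1)\pi(S(k_2))=\pi(hk_1)\pi(S(k_2))$; (PR3) $\pi(h)\pi(S(k_1))\pi(k_2)=\pi(hS(k_1))\pi(k_2)$; (PR4) $\pi(h_1)\pi(S(h_2))\pi(k)=\pi(h_1)\pi(S(h_2)k)$; (PR5) $\pi(S(h_1))\pi(h_2)\pi(k)=\pi(S(h_1))\pi(h_2k)$. *)

theory Defs
  imports Complex_Main
begin

definition k_algebra :: "('k::field \<Rightarrow> 'h::ring_1 \<Rightarrow> 'h) \<Rightarrow> bool" where
  "k_algebra s \<longleftrightarrow> Vector_Spaces.vector_space s \<and>
     (\<forall>c x y. s c (x * y) = s c x * y \<and> s c (x * y) = x * s c y)"

text \<open>Formal k-linear combinations on a set X are finitely supported functions X to k.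
  A list of elements of X denotes the formal sum of its entries.\<close>
definition fsum :: "'x list \<Rightarrow> 'x \<Rightarrow> 'k::field" where
  "fsum xs = (\<lambda>q. of_nat (count_list xs q))"

definition delta :: "'x \<Rightarrow> 'x \<Rightarrow> 'k::field" where
  "delta p = (\<lambda>q. if q = p then 1 else 0)"

inductive in_kspan :: "(('x \<Rightarrow> 'k::field) \<Rightarrow> bool) \<Rightarrow> ('x \<Rightarrow> 'k) \<Rightarrow> bool"
  for G where
  zero: "in_kspan G (\<lambda>q. 0)"
| gen: "G g \<Longrightarrow> in_kspan G g"
| add: "in_kspan G f \<Longrightarrow> in_kspan G g \<Longrightarrow> in_kspan G (\<lambda>q. f q + g q)"
| smult: "in_kspan G f \<Longrightarrow> in_kspan G (\<lambda>q. c * f q)"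

definition bilin_rels :: "('k::field \<Rightarrow> 'h::ab_group_add \<Rightarrow> 'h) \<Rightarrow> ('h \<times> 'h \<Rightarrow> 'k) \<Rightarrow> bool" where
  "bilin_rels s g \<longleftrightarrow>
     (\<exists>a a' b. g = (\<lambda>q. delta (a + a', b) q - delta (a, b) q - delta (a', b) q)) \<or>
     (\<exists>a b b'. g = (\<lambda>q. delta (a, b + b') q - delta (a, b) q - delta (a, b') q)) \<or>
     (\<exists>c a b. g = (\<lambda>q. delta (s c a, b) q - c * delta (a, b) q)) \<or>
     (\<exists>c a b. g = (\<lambda>q. delta (a, s c b) q - c * delta (a, b) q))"

definition trilin_rels :: "('k::field \<Rightarrow> 'h::ab_group_add \<Rightarrow> 'h) \<Rightarrow> ('h \<times> 'h \<times> 'h \<Rightarrow> 'k) \<Rightarrow> bool" where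
  "trilin_rels s g \<longleftrightarrow>
     (\<exists>a a' b d. g = (\<lambda>q. delta (a + a', b, d) q - delta (a, b, d) q - delta (a', b, d) q)) \<or>
     (\<exists>a b b' d. g = (\<lambda>q. delta (a, b + b', d) q - delta (a, b, d) q - delta (a, b', d) q)) \<or>
     (\<exists>a b d d'. g = (\<lambda>q. delta (a, b, d + d') q - delta (a, b, d) q - delta (a, b, d') q)) \<or>
     (\<exists>c a b d. g = (\<lambda>q. delta (s c a, b, d) q - c * delta (a, b, d) q)) \<or>
     (\<exists>c a b d. g = (\<lambda>q. delta (a, s c b, d) q - c * delta (a, b, d) q)) \<or>
     (\<exists>c a b d. g = (\<lambda>q. delta (a, b, s c d) q - c * delta (a, b, d) q))"

text \<open>A list [(a1,b1),...,(an,bn)] represents the tensor a1(x)b1 + ... + an(x)bn;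
  two lists represent the same element of H (x) H iff the difference of their formal
  sums lies in the span of the bilinearity relations.\<close>
definition tensor2_eq :: "('k::field \<Rightarrow> 'h::ab_group_add \<Rightarrow> 'h) \<Rightarrow> ('h \<times> 'h) list \<Rightarrow> ('h \<times> 'h) list \<Rightarrow> bool" where
  "tensor2_eq s xs ys \<longleftrightarrow> in_kspan (bilin_rels s) (\<lambda>q. (fsum xs q :: 'k) - fsum ys q)"

definition tensor3_eq :: "('k::field \<Rightarrow> 'h::ab_group_add \<Rightarrow> 'h) \<Rightarrow> ('h \<times> 'h \<times> 'h) list \<Rightarrow> ('h \<times> 'h \<times> 'h) list \<Rightarrow> bool" where
  "tensor3_eq s xs ys \<longleftrightarrow> in_kspan (trilin_rels s) (\<lambda>q. (fsum xs q :: 'k) - fsum ys q)"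

text \<open>The comultiplication is given by a function D choosing, for each h, a representative
  list of Delta(h) = h_1 (x) h_2.  Delta^2(h) = h_1 (x) h_2 (x) h_3 := (Delta (x) id) Delta(h).\<close>
definition comult2 :: "('h \<Rightarrow> ('h \<times> 'h) list) \<Rightarrow> 'h \<Rightarrow> ('h \<times> 'h \<times> 'h) list" where
  "comult2 D h = concat (map (\<lambda>(x, y). map (\<lambda>(a, b). (a, b, y)) (D x)) (D h))"

definition comult2' :: "('h \<Rightarrow> ('h \<times> 'h) list) \<Rightarrow> 'h \<Rightarrow> ('h \<times> 'h \<times> 'h) list" where
  "comult2' D h = concat (map (\<lambda>(x, y). map (\<lambda>(a, b). (x, a, b)) (D y)) (D h))"

definition tmult2 :: "('h::times \<times> 'h) list \<Rightarrow> ('h \<times> 'h) list \<Rightarrow> ('h \<times> 'h) list" where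
  "tmult2 xs ys = concat (map (\<lambda>(a, b). map (\<lambda>(c, d). (a * c, b * d)) ys) xs)"

definition tmult3 :: "('h::times \<times> 'h \<times> 'h) list \<Rightarrow> ('h \<times> 'h \<times> 'h) list \<Rightarrow> ('h \<times> 'h \<times> 'h) list" where
  "tmult3 xs ys = concat (map (\<lambda>(a, b, c). map (\<lambda>(a', b', c'). (a * a', b * b', c * c')) ys) xs)"

definition weak_hopf_algebra ::
  "('k::field \<Rightarrow> 'h::ring_1 \<Rightarrow> 'h) \<Rightarrow> ('h \<Rightarrow> ('h \<times> 'h) list) \<Rightarrow> ('h \<Rightarrow> 'k) \<Rightarrow> ('h \<Rightarrow> 'h) \<Rightarrow> bool" where
  "weak_hopf_algebra s D \<epsilon> S \<longleftrightarrow>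
     k_algebra s \<and>
     \<comment> \<open>coalgebra: Delta linear, coassociative, counital\<close>
     (\<forall>c x y. tensor2_eq s (D (s c x + y)) (map (\<lambda>(a, b). (s c a, b)) (D x) @ D y)) \<and>
     Vector_Spaces.linear s (*) \<epsilon> \<and>
     (\<forall>h. tensor3_eq s (comult2 D h) (comult2' D h)) \<and>
     (\<forall>h. sum_list (map (\<lambda>(x, y). s (\<epsilon> x) y) (D h)) = h) \<and>
     (\<forall>h. sum_list (map (\<lambda>(x, y). s (\<epsilon> y) x) (D h)) = h) \<and>
     \<comment> \<open>antipode linear\<close>
     Vector_Spaces.linear s s S \<and>
     \<comment> \<open>Delta(kh) = Delta(k) Delta(h)\<close>
     (\<forall>k h. tensor2_eq s (D (k * h)) (tmult2 (D k) (D h))) \<and>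
     \<comment> \<open>weak multiplicativity of the counit\<close>
     (\<forall>k h g. sum_list (map (\<lambda>(x, y). \<epsilon> (k * x) * \<epsilon> (y * g)) (D h)) = \<epsilon> (k * h * g)) \<and>
     (\<forall>k h g. sum_list (map (\<lambda>(x, y). \<epsilon> (k * y) * \<epsilon> (x * g)) (D h)) = \<epsilon> (k * h * g)) \<and>
     \<comment> \<open>weak comultiplicativity of the unit\<close>
     tensor3_eq s (tmult3 (map (\<lambda>(a, b). (1, a, b)) (D 1)) (map (\<lambda>(a, b). (a, b, 1)) (D 1)))
                  (comult2 D 1) \<and>
     tensor3_eq s (tmult3 (map (\<lambda>(a, b). (a, b, 1)) (D 1)) (map (\<lambda>(a, b). (1, a, b)) (D 1)))
                  (comult2 D 1) \<and>
     \<comment> \<open>antipode axioms\<close>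
     (\<forall>h. sum_list (map (\<lambda>(x, y). x * S y) (D h))
            = sum_list (map (\<lambda>(a, b). s (\<epsilon> (a * h)) b) (D 1))) \<and>
     (\<forall>h. sum_list (map (\<lambda>(x, y). S x * y) (D h))
            = sum_list (map (\<lambda>(a, b). s (\<epsilon> (h * b)) a) (D 1))) \<and>
     (\<forall>h. S h = sum_list (map (\<lambda>(x, y, z). S x * y * S z) (comult2 D h)))"

definition PR_conditions ::
  "('h::ring_1 \<Rightarrow> ('h \<times> 'h) list) \<Rightarrow> ('h \<Rightarrow> 'h) \<Rightarrow> ('h \<Rightarrow> 'a::ring_1) \<Rightarrow> bool" where
  "PR_conditions D S \<pi> \<longleftrightarrow>
     \<pi> 1 = 1 \<and>
     (\<forall>h k. sum_list (map (\<lambda>(x, y). \<pi> h * \<pi> x * \<pi> (S y)) (D k))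
          = sum_list (map (\<lambda>(x, y). \<pi> (h * x) * \<pi> (S y)) (D k))) \<and>
     (\<forall>h k. sum_list (map (\<lambda>(x, y). \<pi> h * \<pi> (S x) * \<pi> y) (D k))
          = sum_list (map (\<lambda>(x, y). \<pi> (h * S x) * \<pi> y) (D k))) \<and>
     (\<forall>h k. sum_list (map (\<lambda>(x, y). \<pi> x * \<pi> (S y) * \<pi> k) (D h))
          = sum_list (map (\<lambda>(x, y). \<pi> x * \<pi> (S y * k)) (D h))) \<and>
     (\<forall>h k. sum_list (map (\<lambda>(x, y). \<pi> (S x) * \<pi> y * \<pi> k) (D h))
          = sum_list (map (\<lambda>(x, y). \<pi> (S x) * \<pi> (y * k)) (D h)))"

end

theory Submission
  imports Defs
begin

definition supp :: "('q \<Rightarrow> 'k::zero) \<Rightarrow> 'q set" where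
  "supp g = {q. g q \<noteq> 0}"

lemma supp_fsum_sub: "supp (fsum xs :: 'x \<Rightarrow> 'k::field) \<subseteq> set xs"
  unfolding supp_def fsum_def by clarsimp (rule ccontr, simp)

lemma fin_fsum: "finite (supp (fsum xs :: 'x \<Rightarrow> 'k::field))"
  by (rule finite_subset[OF supp_fsum_sub finite_set])

lemma Phi_superset:
  fixes sV :: "'k::field \<Rightarrow> 'v::ab_group_add \<Rightarrow> 'v"
  assumes vs: "Vector_Spaces.vector_space sV" and T: "finite T" "supp g \<subseteq> T"
  shows "(\<Sum>q\<in>supp g. sV (g q) (F q)) = (\<Sum>q\<in>T. sV (g q) (F q))"
proof -
  interpret V: vector_space sV by fact
  show ?thesis
    by (rule sum.mono_neutral_left) (use T in \<open>auto simp: supp_def intro: finite_subset\<close>)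
qed

lemma kspan_Phi:
  fixes sV :: "'k::field \<Rightarrow> 'v::ab_group_add \<Rightarrow> 'v"
  assumes vs: "Vector_Spaces.vector_space sV"
    and "in_kspan G g"
    and gen: "\<And>g. G g \<Longrightarrow> finite (supp g) \<and> (\<Sum>q\<in>supp g. sV (g q) (F q)) = 0"
  shows "finite (supp g) \<and> (\<Sum>q\<in>supp g. sV (g q) (F q)) = 0"
  using assms(2)
proof (induction rule: in_kspan.induct)
  case zero
  then show ?case by (simp add: supp_def)
next
  case (gen g)
  then show ?case using assms(3) by blast
next
  case (add f g)
  interpret V: vector_space sV by fact
  let ?T = "supp f \<union> supp g"
  have fin: "finite ?T" using add by auto
  have sub: "supp (\<lambda>q. f q + g q) \<subseteq> ?T" by (auto simp: supp_def)
  have "(\<Sum>q\<in>supp (\<lambda>q. f q + g q). sV (f q + g q) (F q)) = (\<Sum>q\<in>?T. sV (f q + g q) (F q))"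
    using Phi_superset[OF vs fin sub, of F] by simp
  also have "\<dots> = (\<Sum>q\<in>?T. sV (f q) (F q)) + (\<Sum>q\<in>?T. sV (g q) (F q))"
    by (simp add: V.scale_left_distrib sum.distrib)
  also have "(\<Sum>q\<in>?T. sV (f q) (F q)) = 0"
    using Phi_superset[OF vs fin, of f F] add by auto
  also have "(\<Sum>q\<in>?T. sV (g q) (F q)) = 0"
    using Phi_superset[OF vs fin, of g F] add by auto
  finally show ?case using fin sub finite_subset by auto
next
  case (smult f c)
  interpret V: vector_space sV by fact
  have fin: "finite (supp f)" using smult by auto
  have sub: "supp (\<lambda>q. c * f q) \<subseteq> supp f" by (auto simp: supp_def)
  have "(\<Sum>q\<in>supp (\<lambda>q. c * f q). sV (c * f q) (F q)) = (\<Sum>q\<in>supp f. sV (c * f q) (F q))"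
    using Phi_superset[OF vs fin sub, of F] by simp
  also have "\<dots> = sV c (\<Sum>q\<in>supp f. sV (f q) (F q))"
    by (simp add: V.scale_sum_right)
  also have "\<dots> = 0" using smult by simp
  finally show ?case using fin sub finite_subset by auto
qed

lemma sum_delta_scale:
  fixes sV :: "'k::field \<Rightarrow> 'v::ab_group_add \<Rightarrow> 'v"
  assumes vs: "Vector_Spaces.vector_space sV" and "finite T" "p \<in> T"
  shows "(\<Sum>q\<in>T. sV (delta p q) (F q)) = F p"
proof -
  interpret V: vector_space sV by fact
  have "(\<Sum>q\<in>T. sV (delta p q) (F q)) = (\<Sum>q\<in>T. if q = p then F q else 0)"
    by (rule sum.cong) (auto simp: delta_def)
  also have "\<dots> = F p" using assms by (simp add: sum.delta')
  finally show ?thesis .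
qed

lemma Phi_fsum_aux:
  fixes sV :: "'k::field \<Rightarrow> 'v::ab_group_add \<Rightarrow> 'v"
  assumes vs: "Vector_Spaces.vector_space sV" and "finite T" "set xs \<subseteq> T"
  shows "(\<Sum>q\<in>T. sV (of_nat (count_list xs q)) (F q)) = sum_list (map F xs)"
  using assms(3)
proof (induction xs)
  case Nil
  interpret V: vector_space sV by fact
  show ?case by simp
next
  case (Cons x xs)
  interpret V: vector_space sV by fact
  have "(\<Sum>q\<in>T. sV (of_nat (count_list (x#xs) q)) (F q))
      = (\<Sum>q\<in>T. sV (delta x q) (F q) + sV (of_nat (count_list xs q)) (F q))"
    by (rule sum.cong) (auto simp: delta_def V.scale_left_distrib)
  also have "\<dots> = F x + sum_list (map F xs)"
    using Cons sum_delta_scale[OF vs assms(2), of x F] by (simp add: sum.distrib)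
  finally show ?case by simp
qed

lemma Phi_fsum:
  fixes sV :: "'k::field \<Rightarrow> 'v::ab_group_add \<Rightarrow> 'v"
  assumes vs: "Vector_Spaces.vector_space sV"
  shows "(\<Sum>q\<in>supp (fsum xs :: _ \<Rightarrow> 'k). sV (fsum xs q) (F q)) = sum_list (map F xs)"
proof -
  have "(\<Sum>q\<in>supp (fsum xs :: _ \<Rightarrow> 'k). sV (fsum xs q) (F q)) = (\<Sum>q\<in>set xs. sV (fsum xs q) (F q))"
    by (rule Phi_superset[OF vs finite_set supp_fsum_sub])
  also have "\<dots> = sum_list (map F xs)"
    unfolding fsum_def by (rule Phi_fsum_aux[OF vs finite_set order_refl])
  finally show ?thesis .
qed

lemma kspan_eval:
  fixes sV :: "'k::field \<Rightarrow> 'v::ab_group_add \<Rightarrow> 'v"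
  assumes vs: "Vector_Spaces.vector_space sV"
    and k: "in_kspan G (\<lambda>q. (fsum xs q :: 'k) - fsum ys q)"
    and gen: "\<And>g. G g \<Longrightarrow> finite (supp g) \<and> (\<Sum>q\<in>supp g. sV (g q) (F q)) = 0"
  shows "sum_list (map F xs) = sum_list (map F ys)"
proof -
  interpret V: vector_space sV by fact
  let ?g = "\<lambda>q. (fsum xs q :: 'k) - fsum ys q"
  let ?T = "supp ?g \<union> supp (fsum xs :: _ \<Rightarrow> 'k) \<union> supp (fsum ys :: _ \<Rightarrow> 'k)"
  have "finite (supp ?g) \<and> (\<Sum>q\<in>supp ?g. sV (?g q) (F q)) = 0"
    using kspan_Phi[OF vs k gen] by blast
  moreover have fx: "finite (supp (fsum xs :: _ \<Rightarrow> 'k))" "finite (supp (fsum ys :: _ \<Rightarrow> 'k))"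
    by (rule fin_fsum)+
  ultimately have fin: "finite ?T" by auto
  have "0 = (\<Sum>q\<in>?T. sV (?g q) (F q))"
    using Phi_superset[OF vs fin, of ?g F] \<open>finite (supp ?g) \<and> _\<close> by auto
  also have "\<dots> = (\<Sum>q\<in>?T. sV (fsum xs q) (F q)) - (\<Sum>q\<in>?T. sV (fsum ys q) (F q))"
    by (simp add: V.scale_left_diff_distrib sum_subtractf)
  also have "(\<Sum>q\<in>?T. sV (fsum xs q) (F q)) = sum_list (map F xs)"
    using Phi_superset[OF vs fin, of "fsum xs" F] Phi_fsum[OF vs, of xs F] by (metis Un_upper2 Un_upper1 subset_trans)
  also have "(\<Sum>q\<in>?T. sV (fsum ys q) (F q)) = sum_list (map F ys)"
    using Phi_superset[OF vs fin, of "fsum ys" F] Phi_fsum[OF vs, of ys F] by (metis Un_upper2 Un_upper1 subset_trans)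
  finally show ?thesis by simp
qed

lemma gen3:
  fixes sV :: "'k::field \<Rightarrow> 'v::ab_group_add \<Rightarrow> 'v"
  assumes vs: "Vector_Spaces.vector_space sV"
  shows "finite (supp (\<lambda>q. (delta p1 q :: 'k) - delta p2 q - delta p3 q)) \<and>
    (\<Sum>q\<in>supp (\<lambda>q. (delta p1 q :: 'k) - delta p2 q - delta p3 q). sV (delta p1 q - delta p2 q - delta p3 q) (F q))
     = F p1 - F p2 - F p3"
proof -
  interpret V: vector_space sV by fact
  let ?T = "{p1, p2, p3}"
  have sub: "supp (\<lambda>q. (delta p1 q :: 'k) - delta p2 q - delta p3 q) \<subseteq> ?T"
    by (auto simp: supp_def delta_def)
  have "(\<Sum>q\<in>?T. sV (delta p1 q - delta p2 q - delta p3 q) (F q))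
     = (\<Sum>q\<in>?T. sV (delta p1 q) (F q)) - (\<Sum>q\<in>?T. sV (delta p2 q) (F q)) - (\<Sum>q\<in>?T. sV (delta p3 q) (F q))"
    by (simp add: V.scale_left_diff_distrib sum_subtractf)
  also have "\<dots> = F p1 - F p2 - F p3"
    by (simp add: sum_delta_scale[OF vs])
  finally show ?thesis using Phi_superset[OF vs _ sub] finite_subset[OF sub] by auto
qed

lemma gen2:
  fixes sV :: "'k::field \<Rightarrow> 'v::ab_group_add \<Rightarrow> 'v"
  assumes vs: "Vector_Spaces.vector_space sV"
  shows "finite (supp (\<lambda>q. (delta p1 q :: 'k) - c * delta p2 q)) \<and>
    (\<Sum>q\<in>supp (\<lambda>q. (delta p1 q :: 'k) - c * delta p2 q). sV (delta p1 q - c * delta p2 q) (F q))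
     = F p1 - sV c (F p2)"
proof -
  interpret V: vector_space sV by fact
  let ?T = "{p1, p2}"
  have sub: "supp (\<lambda>q. (delta p1 q :: 'k) - c * delta p2 q) \<subseteq> ?T"
    by (auto simp: supp_def delta_def)
  have "(\<Sum>q\<in>?T. sV (delta p1 q - c * delta p2 q) (F q))
     = (\<Sum>q\<in>?T. sV (delta p1 q) (F q)) - sV c (\<Sum>q\<in>?T. sV (delta p2 q) (F q))"
    by (simp add: V.scale_left_diff_distrib sum_subtractf V.scale_sum_right)
  also have "\<dots> = F p1 - sV c (F p2)"
    by (simp add: sum_delta_scale[OF vs])
  finally show ?thesis using Phi_superset[OF vs _ sub] finite_subset[OF sub] by auto
qed


definition lin :: "('k::field \<Rightarrow> 'h::ab_group_add \<Rightarrow> 'h) \<Rightarrow> ('k \<Rightarrow> 'v::ab_group_add \<Rightarrow> 'v) \<Rightarrow> ('h \<Rightarrow> 'v) \<Rightarrow> bool" where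
  "lin s sV f \<longleftrightarrow> (\<forall>x y. f (x + y) = f x + f y) \<and> (\<forall>c x. f (s c x) = sV c (f x))"

definition bil :: "('k::field \<Rightarrow> 'h::ab_group_add \<Rightarrow> 'h) \<Rightarrow> ('k \<Rightarrow> 'v::ab_group_add \<Rightarrow> 'v) \<Rightarrow> ('h \<Rightarrow> 'h \<Rightarrow> 'v) \<Rightarrow> bool" where
  "bil s sV F \<longleftrightarrow> (\<forall>a. lin s sV (F a)) \<and> (\<forall>b. lin s sV (\<lambda>a. F a b))"

definition tril :: "('k::field \<Rightarrow> 'h::ab_group_add \<Rightarrow> 'h) \<Rightarrow> ('k \<Rightarrow> 'v::ab_group_add \<Rightarrow> 'v) \<Rightarrow> ('h \<Rightarrow> 'h \<Rightarrow> 'h \<Rightarrow> 'v) \<Rightarrow> bool" where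
  "tril s sV G \<longleftrightarrow> (\<forall>a b. lin s sV (G a b)) \<and> (\<forall>a c. lin s sV (\<lambda>b. G a b c)) \<and> (\<forall>b c. lin s sV (\<lambda>a. G a b c))"

lemma bilI: "(\<And>a. lin s sV (F a)) \<Longrightarrow> (\<And>b. lin s sV (\<lambda>a. F a b)) \<Longrightarrow> bil s sV F"
  by (simp add: bil_def)

lemma trilI: "(\<And>a b. lin s sV (G a b)) \<Longrightarrow> (\<And>a c. lin s sV (\<lambda>b. G a b c)) \<Longrightarrow> (\<And>b c. lin s sV (\<lambda>a. G a b c)) \<Longrightarrow> tril s sV G"
  by (simp add: tril_def)

lemma bilD1: "bil s sV F \<Longrightarrow> lin s sV (F a)" by (simp add: bil_def)
lemma bilD2: "bil s sV F \<Longrightarrow> lin s sV (\<lambda>a. F a b)" by (simp add: bil_def)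
lemma trilD1: "tril s sV G \<Longrightarrow> lin s sV (G a b)" by (simp add: tril_def)
lemma trilD2: "tril s sV G \<Longrightarrow> lin s sV (\<lambda>b. G a b c)" by (simp add: tril_def)
lemma trilD3: "tril s sV G \<Longrightarrow> lin s sV (\<lambda>a. G a b c)" by (simp add: tril_def)

lemma lin_add: "lin s sV f \<Longrightarrow> f (x + y) = f x + f y" by (simp add: lin_def)
lemma lin_scale: "lin s sV f \<Longrightarrow> f (s c x) = sV c (f x)" by (simp add: lin_def)
lemma lin_zero: "lin s sV f \<Longrightarrow> f 0 = 0"
  using lin_add[of s sV f 0 0] by simp
lemma lin_neg: "lin s sV f \<Longrightarrow> f (- x) = - f x"
  using lin_add[of s sV f x "-x"] lin_zero[of s sV f] by (simp add: eq_neg_iff_add_eq_0 add.commute)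
lemma lin_diff: "lin s sV f \<Longrightarrow> f (x - y) = f x - f y"
  using lin_add[of s sV f x "-y"] lin_neg[of s sV f y] by simp
lemma lin_sum_list: "lin s sV f \<Longrightarrow> f (sum_list (map g L)) = sum_list (map (\<lambda>q. f (g q)) L)"
  by (induction L) (simp_all add: lin_zero lin_add)

lemma vsm: "Vector_Spaces.vector_space sV \<Longrightarrow> module sV"
  by (simp add: module_iff_vector_space)
lemmas vs_rd = module.scale_right_distrib[OF vsm]
lemmas vs_ld = module.scale_left_distrib[OF vsm]
lemmas vs_ss = module.scale_scale[OF vsm]
lemmas vs_one = module.scale_one[OF vsm]
lemmas vs_z0 = module.scale_zero_right[OF vsm]
lemmas vs_0z = module.scale_zero_left[OF vsm]
lemmas vs_rdd = module.scale_right_diff_distrib[OF vsm]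
lemmas vs_ldd = module.scale_left_diff_distrib[OF vsm]
lemmas vs_lc = module.scale_left_commute[OF vsm]
lemmas vs_minus_right = module.scale_minus_right[OF vsm]
lemmas vs_minus_left = module.scale_minus_left[OF vsm]

lemma lin_id: "lin s s (\<lambda>x. x)"
  by (simp add: lin_def)

lemma lin_zero_fun: "Vector_Spaces.vector_space sV \<Longrightarrow> lin s sV (\<lambda>x. 0)"
  by (simp add: lin_def vs_z0)

lemma lin_compose: "lin s s g \<Longrightarrow> lin s sV f \<Longrightarrow> lin s sV (\<lambda>x. f (g x))"
  by (simp add: lin_def)

lemma lin_plus: "Vector_Spaces.vector_space sV \<Longrightarrow> lin s sV f \<Longrightarrow> lin s sV g \<Longrightarrow> lin s sV (\<lambda>x. f x + g x)"
  by (simp add: lin_def vs_rd algebra_simps)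

lemma lin_minus: "Vector_Spaces.vector_space sV \<Longrightarrow> lin s sV f \<Longrightarrow> lin s sV g \<Longrightarrow> lin s sV (\<lambda>x. f x - g x)"
  by (simp add: lin_def vs_rdd algebra_simps)

lemma lin_scale_const: "Vector_Spaces.vector_space sV \<Longrightarrow> lin s sV f \<Longrightarrow> lin s sV (\<lambda>x. sV c (f x))"
  by (simp add: lin_def vs_rd vs_lc[of sV c])

lemma lin_scalar: "Vector_Spaces.vector_space sV \<Longrightarrow> lin s (*) f \<Longrightarrow> lin s sV (\<lambda>x. sV (f x) v)"
  by (simp add: lin_def vs_ld vs_ss)

lemma lin_mult_left: "k_algebra sV \<Longrightarrow> lin s sV f \<Longrightarrow> lin s sV (\<lambda>x. u * f x)"
  unfolding lin_def k_algebra_def by (metis distrib_left)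

lemma lin_mult_right: "k_algebra sV \<Longrightarrow> lin s sV f \<Longrightarrow> lin s sV (\<lambda>x. f x * u)"
  by (simp add: lin_def k_algebra_def distrib_right)

lemma lin_sum_fun: "Vector_Spaces.vector_space sV \<Longrightarrow> (\<And>q. q \<in> set L \<Longrightarrow> lin s sV (g q)) \<Longrightarrow>
   lin s sV (\<lambda>x. sum_list (map (\<lambda>q. g q x) L))"
proof (induction L)
  case Nil
  then show ?case by (simp add: lin_zero_fun)
next
  case (Cons a L)
  then show ?case by (simp add: lin_plus)
qed

lemma lin_sum_fun2: "Vector_Spaces.vector_space sV \<Longrightarrow> (\<And>a b. lin s sV (g a b)) \<Longrightarrow>
   lin s sV (\<lambda>x. sum_list (map (\<lambda>(a, b). g a b x) L))"
  using lin_sum_fun[of sV L s "\<lambda>(a,b). g a b"] by (simp add: case_prod_beta')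

lemma vs_field: "Vector_Spaces.vector_space ((*) :: 'k::field \<Rightarrow> 'k \<Rightarrow> 'k)"
  by unfold_locales (simp_all add: algebra_simps)

lemma ka_vs: "k_algebra sV \<Longrightarrow> Vector_Spaces.vector_space sV"
  by (simp add: k_algebra_def)

lemma scale_sum_list: "Vector_Spaces.vector_space sV \<Longrightarrow>
   sV c (sum_list (map g L)) = sum_list (map (\<lambda>q. sV c (g q)) L)"
  by (induction L) (simp_all add: vs_rd vs_z0)

lemma tensor2_eval:
  fixes sV :: "'k::field \<Rightarrow> 'v::ab_group_add \<Rightarrow> 'v" and s :: "'k \<Rightarrow> 'h::ab_group_add \<Rightarrow> 'h"
  assumes vs: "Vector_Spaces.vector_space sV" and F: "bil s sV F" and t: "tensor2_eq s xs ys"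
  shows "sum_list (map (\<lambda>(a, b). F a b) xs) = sum_list (map (\<lambda>(a, b). F a b) ys)"
proof (rule kspan_eval[OF vs t[unfolded tensor2_eq_def]])
  fix g assume "bilin_rels s g"
  then show "finite (supp g) \<and> (\<Sum>q\<in>supp g. sV (g q) ((\<lambda>(a, b). F a b) q)) = 0"
    unfolding bilin_rels_def
  proof (elim disjE exE)
    fix a a' b assume g: "g = (\<lambda>q. delta (a + a', b) q - delta (a, b) q - delta (a', b) q)"
    show ?thesis unfolding g using gen3[OF vs, of "(a + a', b)" "(a, b)" "(a', b)" "\<lambda>(a, b). F a b"]
      lin_add[OF bilD2[OF F]] by simp
  next
    fix a b b' assume g: "g = (\<lambda>q. delta (a, b + b') q - delta (a, b) q - delta (a, b') q)"
    show ?thesis unfolding g using gen3[OF vs, of "(a, b + b')" "(a, b)" "(a, b')" "\<lambda>(a, b). F a b"]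
      lin_add[OF bilD1[OF F]] by simp
  next
    fix c a b assume g: "g = (\<lambda>q. delta (s c a, b) q - c * delta (a, b) q)"
    show ?thesis unfolding g using gen2[OF vs, of "(s c a, b)" c "(a, b)" "\<lambda>(a, b). F a b"]
      lin_scale[OF bilD2[OF F]] by simp
  next
    fix c a b assume g: "g = (\<lambda>q. delta (a, s c b) q - c * delta (a, b) q)"
    show ?thesis unfolding g using gen2[OF vs, of "(a, s c b)" c "(a, b)" "\<lambda>(a, b). F a b"]
      lin_scale[OF bilD1[OF F]] by simp
  qed
qed

lemma tensor3_eval:
  fixes sV :: "'k::field \<Rightarrow> 'v::ab_group_add \<Rightarrow> 'v" and s :: "'k \<Rightarrow> 'h::ab_group_add \<Rightarrow> 'h"
  assumes vs: "Vector_Spaces.vector_space sV" and G: "tril s sV G" and t: "tensor3_eq s xs ys"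
  shows "sum_list (map (\<lambda>(a, b, c). G a b c) xs) = sum_list (map (\<lambda>(a, b, c). G a b c) ys)"
proof (rule kspan_eval[OF vs t[unfolded tensor3_eq_def]])
  fix g assume "trilin_rels s g"
  then show "finite (supp g) \<and> (\<Sum>q\<in>supp g. sV (g q) ((\<lambda>(a, b, c). G a b c) q)) = 0"
    unfolding trilin_rels_def
  proof (elim disjE exE)
    fix a a' b d assume g: "g = (\<lambda>q. delta (a + a', b, d) q - delta (a, b, d) q - delta (a', b, d) q)"
    show ?thesis unfolding g using gen3[OF vs, of "(a + a', b, d)" "(a, b, d)" "(a', b, d)" "\<lambda>(a, b, c). G a b c"]
      lin_add[OF trilD3[OF G]] by simp
  next
    fix a b b' d assume g: "g = (\<lambda>q. delta (a, b + b', d) q - delta (a, b, d) q - delta (a, b', d) q)"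
    show ?thesis unfolding g using gen3[OF vs, of "(a, b + b', d)" "(a, b, d)" "(a, b', d)" "\<lambda>(a, b, c). G a b c"]
      lin_add[OF trilD2[OF G]] by simp
  next
    fix a b d d' assume g: "g = (\<lambda>q. delta (a, b, d + d') q - delta (a, b, d) q - delta (a, b, d') q)"
    show ?thesis unfolding g using gen3[OF vs, of "(a, b, d + d')" "(a, b, d)" "(a, b, d')" "\<lambda>(a, b, c). G a b c"]
      lin_add[OF trilD1[OF G]] by simp
  next
    fix c a b d assume g: "g = (\<lambda>q. delta (s c a, b, d) q - c * delta (a, b, d) q)"
    show ?thesis unfolding g using gen2[OF vs, of "(s c a, b, d)" c "(a, b, d)" "\<lambda>(a, b, c). G a b c"]
      lin_scale[OF trilD3[OF G]] by simp
  next
    fix c a b d assume g: "g = (\<lambda>q. delta (a, s c b, d) q - c * delta (a, b, d) q)"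
    show ?thesis unfolding g using gen2[OF vs, of "(a, s c b, d)" c "(a, b, d)" "\<lambda>(a, b, c). G a b c"]
      lin_scale[OF trilD2[OF G]] by simp
  next
    fix c a b d assume g: "g = (\<lambda>q. delta (a, b, s c d) q - c * delta (a, b, d) q)"
    show ?thesis unfolding g using gen2[OF vs, of "(a, b, s c d)" c "(a, b, d)" "\<lambda>(a, b, c). G a b c"]
      lin_scale[OF trilD1[OF G]] by simp
  qed
qed


definition sw :: "('h \<Rightarrow> ('h \<times> 'h) list) \<Rightarrow> ('h \<Rightarrow> 'h \<Rightarrow> 'v::ab_group_add) \<Rightarrow> 'h \<Rightarrow> 'v" where
  "sw D F h = sum_list (map (\<lambda>(a, b). F a b) (D h))"

lemma linear_lin: "Vector_Spaces.linear s1 s2 f \<Longrightarrow> lin s1 s2 f"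
  unfolding lin_def linear_iff_module_hom by (simp add: module_hom.add module_hom.scale)

lemma linear_vs1: "Vector_Spaces.linear s1 s2 f \<Longrightarrow> Vector_Spaces.vector_space s1"
  by (simp add: Vector_Spaces.linear_def)

lemma sum_list_concat: "sum_list (map f (concat xss)) = sum_list (map (\<lambda>xs. sum_list (map f xs)) xss)"
  by (induction xss) simp_all

lemma sum_list_swap:
  fixes f :: "'x \<Rightarrow> 'y \<Rightarrow> 'a::comm_monoid_add"
  shows "sum_list (map (\<lambda>x. sum_list (map (\<lambda>y. f x y) ys)) xs) = sum_list (map (\<lambda>y. sum_list (map (\<lambda>x. f x y) xs)) ys)"
proof (induction xs)
  case (Cons a xs)
  have "sum_list (map (\<lambda>y. f a y + sum_list (map (\<lambda>x. f x y) xs)) ys) = sum_list (map (\<lambda>y. f a y) ys) + sum_list (map (\<lambda>y. sum_list (map (\<lambda>x. f x y) xs)) ys)"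
    by (rule sum_list_addf)
  then show ?case using Cons by simp
qed simp

lemma sw_swap: "sw D (\<lambda>a b. sw D (\<lambda>c d. F a b c d) y) x = sw D (\<lambda>c d. sw D (\<lambda>a b. F a b c d) x) y"
  unfolding sw_def using sum_list_swap[of "\<lambda>(a,b) (c,d). F a b c d" "D y" "D x"]
  by (simp add: case_prod_beta')

lemma sw_add: "sw D (\<lambda>a b. F a b + G a b) h = sw D F h + sw D G h"
  unfolding sw_def by (simp add: case_prod_beta' sum_list_addf)

lemma sw_lin: "lin s sV f \<Longrightarrow> f (sw D F h) = sw D (\<lambda>a b. f (F a b)) h"
  unfolding sw_def by (simp add: lin_sum_list case_prod_beta')

lemma sw_scale: "Vector_Spaces.vector_space sV \<Longrightarrow> sV c (sw D F h) = sw D (\<lambda>a b. sV c (F a b)) h"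
  unfolding sw_def by (simp add: scale_sum_list case_prod_beta')

lemma sw_mult_left: "(u::'a::ring_1) * sw D F h = sw D (\<lambda>a b. u * F a b) h"
  unfolding sw_def by (simp add: sum_list_const_mult case_prod_beta')

lemma sw_mult_right: "sw D F h * (u::'a::ring_1) = sw D (\<lambda>a b. F a b * u) h"
  unfolding sw_def by (simp add: sum_list_mult_const case_prod_beta')

lemma sw_cong: "(\<And>a b. F a b = G a b) \<Longrightarrow> sw D F h = sw D G h"
  by (simp add: sw_def)

locale wha =
  fixes s :: "'k::field \<Rightarrow> 'h::ring_1 \<Rightarrow> 'h"
    and D :: "'h \<Rightarrow> ('h \<times> 'h) list"
    and \<epsilon> :: "'h \<Rightarrow> 'k"
    and S :: "'h \<Rightarrow> 'h"
  assumes wha: "weak_hopf_algebra s D \<epsilon> S"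
begin

lemma KA: "k_algebra s" using wha unfolding weak_hopf_algebra_def by blast
lemma VS: "Vector_Spaces.vector_space s" using KA by (simp add: k_algebra_def)
lemma lin_S: "lin s s S" using wha unfolding weak_hopf_algebra_def by (blast intro: linear_lin)
lemma lin_eps: "lin s (*) \<epsilon>" using wha unfolding weak_hopf_algebra_def by (blast intro: linear_lin)

lemma ax_Dlin: "tensor2_eq s (D (s c x + y)) (map (\<lambda>(a, b). (s c a, b)) (D x) @ D y)"
  using wha unfolding weak_hopf_algebra_def by blast
lemma ax_coassoc: "tensor3_eq s (comult2 D h) (comult2' D h)"
  using wha unfolding weak_hopf_algebra_def by blast
lemma ax_counit1: "sw D (\<lambda>x y. s (\<epsilon> x) y) h = h"
  using wha unfolding weak_hopf_algebra_def sw_def by blast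
lemma ax_counit2: "sw D (\<lambda>x y. s (\<epsilon> y) x) h = h"
  using wha unfolding weak_hopf_algebra_def sw_def by blast
lemma ax_mult: "tensor2_eq s (D (k * h)) (tmult2 (D k) (D h))"
  using wha unfolding weak_hopf_algebra_def by blast
lemma wm1: "sw D (\<lambda>x y. \<epsilon> (k * x) * \<epsilon> (y * g)) h = \<epsilon> (k * h * g)"
  using wha unfolding weak_hopf_algebra_def sw_def by blast
lemma wm2: "sw D (\<lambda>x y. \<epsilon> (k * y) * \<epsilon> (x * g)) h = \<epsilon> (k * h * g)"
  using wha unfolding weak_hopf_algebra_def sw_def by blast
lemma ax_wc1: "tensor3_eq s (tmult3 (map (\<lambda>(a, b). (1, a, b)) (D 1)) (map (\<lambda>(a, b). (a, b, 1)) (D 1))) (comult2 D 1)"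
  using wha unfolding weak_hopf_algebra_def by blast
lemma ax_wc2: "tensor3_eq s (tmult3 (map (\<lambda>(a, b). (a, b, 1)) (D 1)) (map (\<lambda>(a, b). (1, a, b)) (D 1))) (comult2 D 1)"
  using wha unfolding weak_hopf_algebra_def by blast

definition et :: "'h \<Rightarrow> 'h" where "et h = sw D (\<lambda>a b. s (\<epsilon> (a * h)) b) 1"
definition es :: "'h \<Rightarrow> 'h" where "es h = sw D (\<lambda>a b. s (\<epsilon> (h * b)) a) 1"

lemma ax_t: "sw D (\<lambda>x y. x * S y) h = et h"
  using wha unfolding weak_hopf_algebra_def sw_def et_def by blast
lemma ax_s: "sw D (\<lambda>x y. S x * y) h = es h"
  using wha unfolding weak_hopf_algebra_def sw_def es_def by blast

lemma c2: "sum_list (map (\<lambda>(x, y, z). G x y z) (comult2 D h)) = sw D (\<lambda>a c. sw D (\<lambda>x y. G x y c) a) h"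
  unfolding comult2_def sw_def by (simp add: sum_list_concat case_prod_beta' comp_def)
lemma c2': "sum_list (map (\<lambda>(x, y, z). G x y z) (comult2' D h)) = sw D (\<lambda>x b. sw D (\<lambda>y z. G x y z) b) h"
  unfolding comult2'_def sw_def by (simp add: sum_list_concat case_prod_beta' comp_def)

lemma ax_S: "S h = sw D (\<lambda>a c. sw D (\<lambda>x y. S x * y * S c) a) h"
proof -
  have "S h = sum_list (map (\<lambda>(x, y, z). S x * y * S z) (comult2 D h))"
    using wha unfolding weak_hopf_algebra_def by blast
  then show ?thesis by (simp only: c2)
qed

lemma lin_S_c: "lin s s g \<Longrightarrow> lin s s (\<lambda>x. S (g x))"
  by (rule lin_compose[OF _ lin_S])
lemma lin_eps_c: "lin s s g \<Longrightarrow> lin s (*) (\<lambda>x. \<epsilon> (g x))"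
  by (rule lin_compose[OF _ lin_eps])
lemma lin_ml: "lin s s f \<Longrightarrow> lin s s (\<lambda>x. u * f x)"
  by (rule lin_mult_left[OF KA])
lemma lin_mr: "lin s s f \<Longrightarrow> lin s s (\<lambda>x. f x * u)"
  by (rule lin_mult_right[OF KA])

lemma Dlin:
  assumes vs: "Vector_Spaces.vector_space sV" and F: "bil s sV F"
  shows "sw D F (s c x + y) = sV c (sw D F x) + sw D F y"
proof -
  have "sw D F (s c x + y) = sum_list (map (\<lambda>(a, b). F a b) (map (\<lambda>(a, b). (s c a, b)) (D x) @ D y))"
    unfolding sw_def by (rule tensor2_eval[OF vs F ax_Dlin])
  also have "\<dots> = sw D (\<lambda>a b. F (s c a) b) x + sw D F y"
    by (simp add: sw_def comp_def case_prod_beta')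
  also have "sw D (\<lambda>a b. F (s c a) b) x = sV c (sw D F x)"
    by (simp add: sw_scale[OF vs] lin_scale[OF bilD2[OF F]])
  finally show ?thesis .
qed

lemma lin_sw:
  assumes vs: "Vector_Spaces.vector_space sV" and F: "bil s sV F"
  shows "lin s sV (sw D F)"
proof -
  interpret V: vector_space sV by fact
  have z: "sw D F 0 = 0"
    using Dlin[OF vs F, of 1 0 0] VS by (simp add: vs_one vs_z0)
  show ?thesis unfolding lin_def
    using Dlin[OF vs F, of 1] Dlin[OF vs F, of _ _ 0] VS z by (simp add: vs_one)
qed

lemma lin_sw_c: "Vector_Spaces.vector_space sV \<Longrightarrow> bil s sV F \<Longrightarrow> lin s s g \<Longrightarrow> lin s sV (\<lambda>x. sw D F (g x))"
  by (rule lin_compose[of s g sV "sw D F"]) (simp_all add: lin_sw)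

lemma lin_sw_p: "Vector_Spaces.vector_space sV \<Longrightarrow> (\<And>a b. lin s sV (G a b)) \<Longrightarrow> lin s sV (\<lambda>x. sw D (\<lambda>a b. G a b x) h)"
  unfolding sw_def by (rule lin_sum_fun2)

lemma coassoc:
  assumes vs: "Vector_Spaces.vector_space sV" and G: "tril s sV G"
  shows "sw D (\<lambda>a c. sw D (\<lambda>x y. G x y c) a) h = sw D (\<lambda>x b. sw D (\<lambda>y z. G x y z) b) h"
  using tensor3_eval[OF vs G ax_coassoc[of h]] by (simp add: c2 c2')

lemma tmult2_sum: "sum_list (map (\<lambda>(a, b). F a b) (tmult2 xs ys)) =
   sum_list (map (\<lambda>(a, b). sum_list (map (\<lambda>(c, d). F (a * c) (b * d)) ys)) xs)"
  unfolding tmult2_def by (simp add: sum_list_concat case_prod_beta' comp_def)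

lemma mult:
  assumes vs: "Vector_Spaces.vector_space sV" and F: "bil s sV F"
  shows "sw D F (k * h) = sw D (\<lambda>a b. sw D (\<lambda>c d. F (a * c) (b * d)) h) k"
  using tensor2_eval[OF vs F ax_mult[of k h]] by (simp add: sw_def tmult2_sum)

lemma tmult3_sum: "sum_list (map (\<lambda>(a, b, c). G a b c) (tmult3 xs ys)) =
   sum_list (map (\<lambda>(a, b, c). sum_list (map (\<lambda>(a', b', c'). G (a * a') (b * b') (c * c')) ys)) xs)"
  unfolding tmult3_def by (simp add: sum_list_concat case_prod_beta' comp_def)

lemma wc1:
  assumes vs: "Vector_Spaces.vector_space sV" and G: "tril s sV G"
  shows "sw D (\<lambda>a c. sw D (\<lambda>x y. G x y c) a) 1 = sw D (\<lambda>a b. sw D (\<lambda>a' b'. G a' (a * b') b) 1) 1"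
  using tensor3_eval[OF vs G ax_wc1] unfolding c2 tmult3_sum by (simp add: sw_def comp_def case_prod_beta')

lemma wc2:
  assumes vs: "Vector_Spaces.vector_space sV" and G: "tril s sV G"
  shows "sw D (\<lambda>a c. sw D (\<lambda>x y. G x y c) a) 1 = sw D (\<lambda>a b. sw D (\<lambda>a' b'. G a (b * a') b') 1) 1"
  using tensor3_eval[OF vs G ax_wc2] unfolding c2 tmult3_sum by (simp add: sw_def comp_def case_prod_beta')

end

context wha
begin

lemma bil_l: "bil s sV F \<Longrightarrow> lin s sV (\<lambda>a. F a b)" by (rule bilD2)
lemma bil_r: "bil s sV F \<Longrightarrow> lin s sV (\<lambda>b. F a b)" using bilD1[of s sV F a] by simp

lemma bil_lc: "bil s sV F \<Longrightarrow> lin s s g \<Longrightarrow> lin s sV (\<lambda>x. F (g x) b)"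
  by (rule lin_compose[of s g sV "\<lambda>a. F a b"]) (simp_all add: bil_l)
lemma bil_rc: "bil s sV F \<Longrightarrow> lin s s g \<Longrightarrow> lin s sV (\<lambda>x. F a (g x))"
  by (rule lin_compose[of s g sV "\<lambda>b. F a b"]) (simp_all add: bil_r)

lemma counit_lin: "lin s sV f \<Longrightarrow> Vector_Spaces.vector_space sV \<Longrightarrow> f h = sw D (\<lambda>u v. sV (\<epsilon> v) (f u)) h"
proof -
  assume f: "lin s sV f" and vs: "Vector_Spaces.vector_space sV"
  have "f h = f (sw D (\<lambda>x y. s (\<epsilon> y) x) h)" by (simp add: ax_counit2)
  also have "\<dots> = sw D (\<lambda>u v. sV (\<epsilon> v) (f u)) h" by (simp add: sw_lin[OF f] lin_scale[OF f])
  finally show ?thesis .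
qed

lemma counit_lin': "lin s sV f \<Longrightarrow> Vector_Spaces.vector_space sV \<Longrightarrow> f h = sw D (\<lambda>u v. sV (\<epsilon> u) (f v)) h"
proof -
  assume f: "lin s sV f" and vs: "Vector_Spaces.vector_space sV"
  have "f h = f (sw D (\<lambda>x y. s (\<epsilon> x) y) h)" by (simp add: ax_counit1)
  also have "\<dots> = sw D (\<lambda>u v. sV (\<epsilon> u) (f v)) h" by (simp add: sw_lin[OF f] lin_scale[OF f])
  finally show ?thesis .
qed

lemmas lin_rules = lin_id lin_S_c lin_eps_c lin_ml lin_mr

lemma J1:
  assumes vs: "Vector_Spaces.vector_space sV" and F: "bil s sV F"
  shows "sw D (\<lambda>a b. F a (et b)) x = sw D (\<lambda>a b. F (a * x) b) 1"
proof -
  have "sw D (\<lambda>p q. F (p * x) q) 1 = sw D (\<lambda>p q. sw D (\<lambda>u v. sV (\<epsilon> v) (F u q)) (p * x)) 1"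
    by (rule sw_cong, rule counit_lin[OF bil_l[OF F] vs])
  also have "\<dots> = sw D (\<lambda>p q. sw D (\<lambda>a b. sw D (\<lambda>c d. sV (\<epsilon> (b * d)) (F (a * c) q)) x) p) 1"
    by (rule sw_cong, rule mult[OF vs])
      (intro bilI lin_scale_const[OF vs] lin_scalar[OF vs] bil_lc[OF F] bil_rc[OF F] lin_rules)
  also have "\<dots> = sw D (\<lambda>a b. sw D (\<lambda>a' b'. sw D (\<lambda>c d. sV (\<epsilon> (a * b' * d)) (F (a' * c) b)) x) 1) 1"
    by (rule wc1[OF vs])
      (intro trilI lin_scale_const[OF vs] lin_scalar[OF vs] bil_lc[OF F] bil_rc[OF F] lin_rules lin_sw_p[OF vs])
  also have "\<dots> = sw D (\<lambda>a b. sw D (\<lambda>c d. sV (\<epsilon> (a * d)) (F c b)) x) 1"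
  proof (rule sw_cong)
    fix a b
    have "sw D (\<lambda>c d. sV (\<epsilon> (a * d)) (F c b)) (1 * x) =
      sw D (\<lambda>a' b'. sw D (\<lambda>c d. sV (\<epsilon> (a * (b' * d))) (F (a' * c) b)) x) 1"
      by (rule mult[OF vs])
        (intro bilI lin_scale_const[OF vs] lin_scalar[OF vs] bil_lc[OF F] bil_rc[OF F] lin_rules)
    then show "sw D (\<lambda>a' b'. sw D (\<lambda>c d. sV (\<epsilon> (a * b' * d)) (F (a' * c) b)) x) 1 =
      sw D (\<lambda>c d. sV (\<epsilon> (a * d)) (F c b)) x"
      by (simp add: mult.assoc)
  qed
  also have "\<dots> = sw D (\<lambda>c d. sw D (\<lambda>a b. sV (\<epsilon> (a * d)) (F c b)) 1) x"
    by (rule sw_swap)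
  also have "\<dots> = sw D (\<lambda>c d. F c (et d)) x"
    unfolding et_def
    by (rule sw_cong) (simp add: sw_lin[OF bil_r[OF F]] lin_scale[OF bil_r[OF F]])
  finally show ?thesis by simp
qed


lemma J2:
  assumes vs: "Vector_Spaces.vector_space sV" and F: "bil s sV F"
  shows "sw D (\<lambda>a b. F (es a) b) x = sw D (\<lambda>a b. F a (x * b)) 1"
proof -
  have "sw D (\<lambda>p q. F p (x * q)) 1 = sw D (\<lambda>p q. sw D (\<lambda>u v. sV (\<epsilon> u) (F p v)) (x * q)) 1"
    by (rule sw_cong, rule counit_lin'[OF bil_r[OF F] vs])
  also have "\<dots> = sw D (\<lambda>p q. sw D (\<lambda>a b. sw D (\<lambda>c d. sV (\<epsilon> (a * c)) (F p (b * d))) q) x) 1"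
    by (rule sw_cong, rule mult[OF vs])
      (intro bilI lin_scale_const[OF vs] lin_scalar[OF vs] bil_lc[OF F] bil_rc[OF F] lin_rules)
  also have "\<dots> = sw D (\<lambda>p q. sw D (\<lambda>c d. sw D (\<lambda>a b. sV (\<epsilon> (a * c)) (F p (b * d))) x) q) 1"
    by (rule sw_cong, rule sw_swap)
  also have "\<dots> = sw D (\<lambda>r d. sw D (\<lambda>p c. sw D (\<lambda>a b. sV (\<epsilon> (a * c)) (F p (b * d))) x) r) 1"
    by (rule coassoc[OF vs, symmetric])
      (intro trilI lin_scale_const[OF vs] lin_scalar[OF vs] bil_lc[OF F] bil_rc[OF F] lin_rules lin_sw_p[OF vs])
  also have "\<dots> = sw D (\<lambda>a0 b0. sw D (\<lambda>a' b'. sw D (\<lambda>a b. sV (\<epsilon> (a * (a0 * b'))) (F a' (b * b0))) x) 1) 1"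
    by (rule wc1[OF vs])
      (intro trilI lin_scale_const[OF vs] lin_scalar[OF vs] bil_lc[OF F] bil_rc[OF F] lin_rules lin_sw_p[OF vs])
  also have "\<dots> = sw D (\<lambda>a' b'. sw D (\<lambda>a0 b0. sw D (\<lambda>a b. sV (\<epsilon> (a * (a0 * b'))) (F a' (b * b0))) x) 1) 1"
    by (rule sw_swap)
  also have "\<dots> = sw D (\<lambda>a' b'. sw D (\<lambda>a b. sV (\<epsilon> (a * b')) (F a' b)) x) 1"
  proof (rule sw_cong)
    fix a' b'
    have "sw D (\<lambda>a b. sV (\<epsilon> (a * b')) (F a' b)) (x * 1) =
      sw D (\<lambda>a b. sw D (\<lambda>a0 b0. sV (\<epsilon> (a * a0 * b')) (F a' (b * b0))) 1) x"
      by (rule mult[OF vs])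
        (intro bilI lin_scale_const[OF vs] lin_scalar[OF vs] bil_lc[OF F] bil_rc[OF F] lin_rules)
    then show "sw D (\<lambda>a0 b0. sw D (\<lambda>a b. sV (\<epsilon> (a * (a0 * b'))) (F a' (b * b0))) x) 1 =
      sw D (\<lambda>a b. sV (\<epsilon> (a * b')) (F a' b)) x"
      by (simp add: mult.assoc sw_swap[of _ "\<lambda>a0 b0 a b. sV (\<epsilon> (a * (a0 * b'))) (F a' (b * b0))"])
  qed
  also have "\<dots> = sw D (\<lambda>a b. sw D (\<lambda>a' b'. sV (\<epsilon> (a * b')) (F a' b)) 1) x"
    by (rule sw_swap)
  also have "\<dots> = sw D (\<lambda>a b. F (es a) b) x"
    unfolding es_def
    by (rule sw_cong) (simp add: sw_lin[OF bil_l[OF F]] lin_scale[OF bil_l[OF F]])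
  finally show ?thesis by simp
qed

lemma bil_Smult: "bil s s (\<lambda>a b. S a * b)"
  by (intro bilI lin_rules)

lemma bil_multS: "bil s s (\<lambda>a b. a * S b)"
  by (intro bilI lin_rules)

lemma S_et: "S x = sw D (\<lambda>a b. S a * et b) x"
proof -
  have "S x = sw D (\<lambda>a c. sw D (\<lambda>u v. S u * v * S c) a) x" by (rule ax_S)
  also have "\<dots> = sw D (\<lambda>u b. sw D (\<lambda>v w. S u * v * S w) b) x"
    by (rule coassoc[OF VS]) (intro trilI lin_rules)
  also have "\<dots> = sw D (\<lambda>u b. S u * et b) x"
    by (rule sw_cong) (simp add: ax_t[symmetric] sw_mult_left mult.assoc)
  finally show ?thesis .
qed

lemma S_es: "S x = sw D (\<lambda>a b. es a * S b) x"
proof -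
  have "S x = sw D (\<lambda>a c. sw D (\<lambda>u v. S u * v * S c) a) x" by (rule ax_S)
  also have "\<dots> = sw D (\<lambda>a b. es a * S b) x"
    by (rule sw_cong) (simp add: ax_s[symmetric] sw_mult_right mult.assoc)
  finally show ?thesis .
qed

lemma SJ1: "S x = sw D (\<lambda>a b. S (a * x) * b) 1"
  using S_et J1[OF VS bil_Smult] by (rule trans)

lemma SJ2: "S x = sw D (\<lambda>a b. a * S (x * b)) 1"
  using S_es J2[OF VS bil_multS] by (rule trans)

lemma S_one: "S 1 = 1"
proof -
  have "S 1 = sw D (\<lambda>a b. S (a * 1) * b) 1" by (rule SJ1)
  also have "\<dots> = sw D (\<lambda>a b. S a * b) 1" by simp
  also have "\<dots> = es 1" by (rule ax_s)
  also have "\<dots> = 1" unfolding es_def using ax_counit2[of 1] by simp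
  finally show ?thesis .
qed

end

lemma sl_scale_left: "Vector_Spaces.vector_space sV \<Longrightarrow> sum_list (map (\<lambda>q. sV (f q) v) L) = sV (sum_list (map f L)) v"
  by (induction L) (simp_all add: vs_ld vs_0z)

lemma sw_scale_left: "Vector_Spaces.vector_space sV \<Longrightarrow> sw D (\<lambda>a b. sV (f a b) v) h = sV (sw D f h) v"
  unfolding sw_def using sl_scale_left[of sV "\<lambda>(a,b). f a b" v "D h"] by (simp add: case_prod_beta')

context wha
begin

lemma K: "es y = sw D (\<lambda>a b. s (\<epsilon> (y * a)) (S b)) 1"
proof -
  have "sw D (\<lambda>a q. sw D (\<lambda>u v. s (\<epsilon> (y * a)) (S u * v)) q) 1 = sw D (\<lambda>a q. s (\<epsilon> (y * a)) (es q)) 1"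
    by (rule sw_cong) (simp add: ax_s[symmetric] sw_scale[OF VS])
  also have "\<dots> = sw D (\<lambda>a q. sw D (\<lambda>a' b'. s (\<epsilon> (y * a) * \<epsilon> (q * b')) a') 1) 1"
    unfolding es_def by (rule sw_cong) (simp add: sw_scale[OF VS] vs_ss[OF VS])
  also have "\<dots> = sw D (\<lambda>a' b'. sw D (\<lambda>a q. s (\<epsilon> (y * a) * \<epsilon> (q * b')) a') 1) 1"
    by (rule sw_swap)
  also have "\<dots> = sw D (\<lambda>a' b'. s (\<epsilon> (y * 1 * b')) a') 1"
    by (rule sw_cong) (simp add: sw_scale_left[OF VS] wm1)
  also have "\<dots> = es y" by (simp add: es_def)
  finally have e1: "es y = sw D (\<lambda>a q. sw D (\<lambda>u v. s (\<epsilon> (y * a)) (S u * v)) q) 1" by simp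
  also have "\<dots> = sw D (\<lambda>r v. sw D (\<lambda>a u. s (\<epsilon> (y * a)) (S u * v)) r) 1"
    by (rule coassoc[OF VS, symmetric])
      (intro trilI lin_rules lin_scale_const[OF VS] lin_scalar[OF VS])
  also have "\<dots> = sw D (\<lambda>a b. sw D (\<lambda>a' b'. s (\<epsilon> (y * a')) (S (a * b') * b)) 1) 1"
    by (rule wc1[OF VS])
      (intro trilI lin_rules lin_scale_const[OF VS] lin_scalar[OF VS])
  also have "\<dots> = sw D (\<lambda>a' b'. sw D (\<lambda>a b. s (\<epsilon> (y * a')) (S (a * b') * b)) 1) 1"
    by (rule sw_swap)
  also have "\<dots> = sw D (\<lambda>a' b'. s (\<epsilon> (y * a')) (sw D (\<lambda>a b. S (a * b') * b) 1)) 1"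
    by (rule sw_cong) (simp add: sw_scale[OF VS])
  also have "\<dots> = sw D (\<lambda>a' b'. s (\<epsilon> (y * a')) (S b')) 1"
    by (rule sw_cong) (simp only: SJ1[symmetric])
  finally show ?thesis .
qed

lemma K': "et y = sw D (\<lambda>a b. s (\<epsilon> (b * y)) (S a)) 1"
proof -
  have "sw D (\<lambda>p c. sw D (\<lambda>u v. s (\<epsilon> (c * y)) (u * S v)) p) 1 = sw D (\<lambda>p c. s (\<epsilon> (c * y)) (et p)) 1"
    by (rule sw_cong) (simp add: ax_t[symmetric] sw_scale[OF VS])
  also have "\<dots> = sw D (\<lambda>p c. sw D (\<lambda>a' b'. s (\<epsilon> (a' * p) * \<epsilon> (c * y)) b') 1) 1"
    unfolding et_def by (rule sw_cong) (simp add: sw_scale[OF VS] vs_ss[OF VS] mult.commute)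
  also have "\<dots> = sw D (\<lambda>a' b'. sw D (\<lambda>p c. s (\<epsilon> (a' * p) * \<epsilon> (c * y)) b') 1) 1"
    by (rule sw_swap)
  also have "\<dots> = sw D (\<lambda>a' b'. s (\<epsilon> (a' * 1 * y)) b') 1"
    by (rule sw_cong) (simp add: sw_scale_left[OF VS] wm1)
  also have "\<dots> = et y" by (simp add: et_def)
  finally have e1: "et y = sw D (\<lambda>p c. sw D (\<lambda>u v. s (\<epsilon> (c * y)) (u * S v)) p) 1" by simp
  also have "\<dots> = sw D (\<lambda>a b. sw D (\<lambda>a' b'. s (\<epsilon> (b * y)) (a' * S (a * b'))) 1) 1"
    by (rule wc1[OF VS])
      (intro trilI lin_rules lin_scale_const[OF VS] lin_scalar[OF VS])
  also have "\<dots> = sw D (\<lambda>a b. s (\<epsilon> (b * y)) (sw D (\<lambda>a' b'. a' * S (a * b')) 1)) 1"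
    by (rule sw_cong) (simp add: sw_scale[OF VS])
  also have "\<dots> = sw D (\<lambda>a b. s (\<epsilon> (b * y)) (S a)) 1"
    by (rule sw_cong) (simp only: SJ2[symmetric])
  finally show ?thesis .
qed


lemma I1:
  assumes vs: "Vector_Spaces.vector_space sV" and F: "bil s sV F"
  shows "sw D (\<lambda>a b. F a (es b)) h = sw D (\<lambda>p q. F (h * p) (S q)) 1"
proof -
  have "sw D (\<lambda>p q. F (h * p) (S q)) 1 = sw D (\<lambda>p q. sw D (\<lambda>u v. sV (\<epsilon> v) (F u (S q))) (h * p)) 1"
    by (rule sw_cong, rule counit_lin[OF bil_l[OF F] vs])
  also have "\<dots> = sw D (\<lambda>p q. sw D (\<lambda>a b. sw D (\<lambda>c d. sV (\<epsilon> (b * d)) (F (a * c) (S q))) p) h) 1"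
    by (rule sw_cong, rule mult[OF vs])
      (intro bilI lin_scale_const[OF vs] lin_scalar[OF vs] bil_lc[OF F] bil_rc[OF F] lin_rules)
  also have "\<dots> = sw D (\<lambda>p q. sw D (\<lambda>c d. sw D (\<lambda>a b. sV (\<epsilon> (b * d)) (F (a * c) (S q))) h) p) 1"
    by (rule sw_cong, rule sw_swap)
  also have "\<dots> = sw D (\<lambda>a0 b0. sw D (\<lambda>a' b'. sw D (\<lambda>a b. sV (\<epsilon> (b * (b0 * a'))) (F (a * a0) (S b'))) h) 1) 1"
    by (rule wc2[OF vs])
      (intro trilI lin_scale_const[OF vs] lin_scalar[OF vs] bil_lc[OF F] bil_rc[OF F] lin_rules lin_sw_p[OF vs])
  also have "\<dots> = sw D (\<lambda>a' b'. sw D (\<lambda>a0 b0. sw D (\<lambda>a b. sV (\<epsilon> (b * (b0 * a'))) (F (a * a0) (S b'))) h) 1) 1"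
    by (rule sw_swap)
  also have "\<dots> = sw D (\<lambda>a' b'. sw D (\<lambda>a b. sV (\<epsilon> (b * a')) (F a (S b'))) h) 1"
  proof (rule sw_cong)
    fix a' b'
    have "sw D (\<lambda>a b. sV (\<epsilon> (b * a')) (F a (S b'))) (h * 1) =
      sw D (\<lambda>a b. sw D (\<lambda>a0 b0. sV (\<epsilon> (b * b0 * a')) (F (a * a0) (S b'))) 1) h"
      by (rule mult[OF vs])
        (intro bilI lin_scale_const[OF vs] lin_scalar[OF vs] bil_lc[OF F] bil_rc[OF F] lin_rules)
    then show "sw D (\<lambda>a0 b0. sw D (\<lambda>a b. sV (\<epsilon> (b * (b0 * a'))) (F (a * a0) (S b'))) h) 1 =
      sw D (\<lambda>a b. sV (\<epsilon> (b * a')) (F a (S b'))) h"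
      by (simp add: mult.assoc sw_swap[of _ "\<lambda>a0 b0 a b. sV (\<epsilon> (b * (b0 * a'))) (F (a * a0) (S b'))"])
  qed
  also have "\<dots> = sw D (\<lambda>a b. sw D (\<lambda>a' b'. sV (\<epsilon> (b * a')) (F a (S b'))) 1) h"
    by (rule sw_swap)
  also have "\<dots> = sw D (\<lambda>a b. F a (es b)) h"
    by (rule sw_cong) (simp add: K sw_lin[OF bil_r[OF F]] lin_scale[OF bil_r[OF F]])
  finally show ?thesis by simp
qed

lemma I2:
  assumes vs: "Vector_Spaces.vector_space sV" and F: "bil s sV F"
  shows "sw D (\<lambda>a b. F (et a) b) x = sw D (\<lambda>p q. F (S p) (q * x)) 1"
proof -
  have "sw D (\<lambda>p q. F (S p) (q * x)) 1 = sw D (\<lambda>p q. sw D (\<lambda>u v. sV (\<epsilon> u) (F (S p) v)) (q * x)) 1"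
    by (rule sw_cong, rule counit_lin'[OF bil_r[OF F] vs])
  also have "\<dots> = sw D (\<lambda>p q. sw D (\<lambda>c d. sw D (\<lambda>a b. sV (\<epsilon> (c * a)) (F (S p) (d * b))) x) q) 1"
    by (rule sw_cong, rule mult[OF vs])
      (intro bilI lin_scale_const[OF vs] lin_scalar[OF vs] bil_lc[OF F] bil_rc[OF F] lin_rules)
  also have "\<dots> = sw D (\<lambda>r d. sw D (\<lambda>p c. sw D (\<lambda>a b. sV (\<epsilon> (c * a)) (F (S p) (d * b))) x) r) 1"
    by (rule coassoc[OF vs, symmetric])
      (intro trilI lin_scale_const[OF vs] lin_scalar[OF vs] bil_lc[OF F] bil_rc[OF F] lin_rules lin_sw_p[OF vs])
  also have "\<dots> = sw D (\<lambda>a0 b0. sw D (\<lambda>a' b'. sw D (\<lambda>a b. sV (\<epsilon> (b0 * a' * a)) (F (S a0) (b' * b))) x) 1) 1"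
    by (rule wc2[OF vs])
      (intro trilI lin_scale_const[OF vs] lin_scalar[OF vs] bil_lc[OF F] bil_rc[OF F] lin_rules lin_sw_p[OF vs])
  also have "\<dots> = sw D (\<lambda>a0 b0. sw D (\<lambda>a b. sV (\<epsilon> (b0 * a)) (F (S a0) b)) x) 1"
  proof (rule sw_cong)
    fix a0 b0
    have "sw D (\<lambda>a b. sV (\<epsilon> (b0 * a)) (F (S a0) b)) (1 * x) =
      sw D (\<lambda>a' b'. sw D (\<lambda>a b. sV (\<epsilon> (b0 * (a' * a))) (F (S a0) (b' * b))) x) 1"
      by (rule mult[OF vs])
        (intro bilI lin_scale_const[OF vs] lin_scalar[OF vs] bil_lc[OF F] bil_rc[OF F] lin_rules)
    then show "sw D (\<lambda>a' b'. sw D (\<lambda>a b. sV (\<epsilon> (b0 * a' * a)) (F (S a0) (b' * b))) x) 1 =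
      sw D (\<lambda>a b. sV (\<epsilon> (b0 * a)) (F (S a0) b)) x"
      by (simp add: mult.assoc)
  qed
  also have "\<dots> = sw D (\<lambda>a b. sw D (\<lambda>a0 b0. sV (\<epsilon> (b0 * a)) (F (S a0) b)) 1) x"
    by (rule sw_swap)
  also have "\<dots> = sw D (\<lambda>a b. F (et a) b) x"
    by (rule sw_cong) (simp add: K' sw_lin[OF bil_l[OF F]] lin_scale[OF bil_l[OF F]])
  finally show ?thesis by simp
qed

lemma U:
  assumes vs: "Vector_Spaces.vector_space sV" and F: "bil s sV F"
  shows "sw D F 1 = sw D (\<lambda>a b. F (S b) (S a)) 1"
proof -
  have "sw D F 1 = sw D (\<lambda>a b. F (a * 1) b) 1" by simp
  also have "\<dots> = sw D (\<lambda>a b. F a (et b)) 1" by (rule J1[OF vs F, symmetric])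
  also have "\<dots> = sw D (\<lambda>a b. sw D (\<lambda>a' b'. sV (\<epsilon> (a' * b)) (F a b')) 1) 1"
    unfolding et_def by (rule sw_cong) (simp add: sw_lin[OF bil_r[OF F]] lin_scale[OF bil_r[OF F]])
  also have "\<dots> = sw D (\<lambda>a' b'. sw D (\<lambda>a b. sV (\<epsilon> (a' * b)) (F a b')) 1) 1"
    by (rule sw_swap)
  also have "\<dots> = sw D (\<lambda>a' b'. F (es a') b') 1"
    unfolding es_def by (rule sw_cong) (simp add: sw_lin[OF bil_l[OF F]] lin_scale[OF bil_l[OF F]])
  also have "\<dots> = sw D (\<lambda>a' b'. sw D (\<lambda>a b. sV (\<epsilon> (a' * a)) (F (S b) b')) 1) 1"
    by (rule sw_cong) (simp add: K sw_lin[OF bil_l[OF F]] lin_scale[OF bil_l[OF F]])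
  also have "\<dots> = sw D (\<lambda>a b. sw D (\<lambda>a' b'. sV (\<epsilon> (a' * a)) (F (S b) b')) 1) 1"
    by (rule sw_swap)
  also have "\<dots> = sw D (\<lambda>a b. F (S b) (et a)) 1"
    unfolding et_def by (rule sw_cong) (simp add: sw_lin[OF bil_r[OF F]] lin_scale[OF bil_r[OF F]])
  also have "\<dots> = sw D (\<lambda>p q. F (S (q * 1)) (S p)) 1"
  proof -
    have b: "bil s sV (\<lambda>P Q. F (S Q) P)"
      by (intro bilI bil_lc[OF F] bil_rc[OF F] lin_rules)
    show ?thesis using I2[OF vs b, of 1] by simp
  qed
  finally show ?thesis by simp
qed

end

context wha
begin

lemma ka1: "s c (x * y) = s c x * y" using KA unfolding k_algebra_def by blast
lemma ka2: "s c (x * y) = x * s c y" using KA unfolding k_algebra_def by blast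
lemma ka3: "s c x * s d y = s c (s d (x * y))" by (simp add: ka1[symmetric] ka2[symmetric] vs_lc[OF VS])

lemma eps_es: "\<epsilon> (es x * w) = \<epsilon> (x * w)"
proof -
  have "\<epsilon> (es x * w) = sw D (\<lambda>a b. \<epsilon> (x * b) * \<epsilon> (a * w)) 1"
    unfolding es_def by (simp add: sw_mult_right ka1[symmetric] sw_lin[OF lin_eps] lin_scale[OF lin_eps])
  also have "\<dots> = \<epsilon> (x * 1 * w)" by (rule wm2)
  finally show ?thesis by simp
qed

lemma es_es: "es (es x * y) = es (x * y)"
  unfolding es_def[of "es x * y"] es_def[of "x * y"]
  by (rule sw_cong) (simp add: mult.assoc eps_es)

lemma D_es:
  assumes vs: "Vector_Spaces.vector_space sV" and F: "bil s sV F"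
  shows "sw D F (es x) = sw D (\<lambda>a b. F a (b * es x)) 1"
proof -
  have "sw D F (es x) = sw D (\<lambda>p q. sV (\<epsilon> (x * q)) (sw D F p)) 1"
    unfolding es_def by (simp add: sw_lin[OF lin_sw[OF vs F]] lin_scale[OF lin_sw[OF vs F]])
  also have "\<dots> = sw D (\<lambda>p q. sw D (\<lambda>u v. sV (\<epsilon> (x * q)) (F u v)) p) 1"
    by (rule sw_cong) (simp add: sw_scale[OF vs])
  also have "\<dots> = sw D (\<lambda>a b. sw D (\<lambda>a' b'. sV (\<epsilon> (x * b')) (F a (b * a'))) 1) 1"
    by (rule wc2[OF vs])
      (intro trilI lin_scale_const[OF vs] lin_scalar[OF vs] bil_lc[OF F] bil_rc[OF F] lin_rules)
  also have "\<dots> = sw D (\<lambda>a b. F a (b * es x)) 1"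
  proof (rule sw_cong)
    fix a b
    have l: "lin s sV (\<lambda>z. F a (b * z))" by (intro bil_rc[OF F] lin_rules)
    show "sw D (\<lambda>a' b'. sV (\<epsilon> (x * b')) (F a (b * a'))) 1 = F a (b * es x)"
      unfolding es_def by (simp add: sw_lin[OF l] lin_scale[OF l])
  qed
  finally show ?thesis .
qed

lemma D_et:
  assumes vs: "Vector_Spaces.vector_space sV" and F: "bil s sV F"
  shows "sw D F (et w) = sw D (\<lambda>a b. F (a * et w) b) 1"
proof -
  have "sw D F (et w) = sw D (\<lambda>p q. sV (\<epsilon> (p * w)) (sw D F q)) 1"
    unfolding et_def by (simp add: sw_lin[OF lin_sw[OF vs F]] lin_scale[OF lin_sw[OF vs F]])
  also have "\<dots> = sw D (\<lambda>p q. sw D (\<lambda>u v. sV (\<epsilon> (p * w)) (F u v)) q) 1"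
    by (rule sw_cong) (simp add: sw_scale[OF vs])
  also have "\<dots> = sw D (\<lambda>r v. sw D (\<lambda>p u. sV (\<epsilon> (p * w)) (F u v)) r) 1"
    by (rule coassoc[OF vs, symmetric])
      (intro trilI lin_scale_const[OF vs] lin_scalar[OF vs] bil_lc[OF F] bil_rc[OF F] lin_rules)
  also have "\<dots> = sw D (\<lambda>a b. sw D (\<lambda>a' b'. sV (\<epsilon> (a' * w)) (F (a * b') b)) 1) 1"
    by (rule wc1[OF vs])
      (intro trilI lin_scale_const[OF vs] lin_scalar[OF vs] bil_lc[OF F] bil_rc[OF F] lin_rules)
  also have "\<dots> = sw D (\<lambda>a b. F (a * et w) b) 1"
  proof (rule sw_cong)
    fix a b
    have l: "lin s sV (\<lambda>z. F (a * z) b)" by (intro bil_lc[OF F] lin_rules)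
    show "sw D (\<lambda>a' b'. sV (\<epsilon> (a' * w)) (F (a * b') b)) 1 = F (a * et w) b"
      unfolding et_def by (simp add: sw_lin[OF l] lin_scale[OF l])
  qed
  finally show ?thesis .
qed

lemma es_mult: "es (es x * y) = sw D (\<lambda>a b. S a * es x * b) y"
proof -
  have F: "bil s s (\<lambda>p q. sw D (\<lambda>a b. S (p * a) * (q * b)) y)"
    by (intro bilI lin_sw_p[OF VS] lin_rules)
  have "es (es x * y) = sw D (\<lambda>u v. S u * v) (es x * y)" by (simp add: ax_s)
  also have "\<dots> = sw D (\<lambda>p q. sw D (\<lambda>a b. S (p * a) * (q * b)) y) (es x)"
    by (rule mult[OF VS]) (intro bilI lin_rules)
  also have "\<dots> = sw D (\<lambda>p q. sw D (\<lambda>a b. S (p * a) * (q * (es x * b))) y) 1"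
    by (simp add: D_es[OF VS F] mult.assoc)
  also have "\<dots> = sw D (\<lambda>a b. sw D (\<lambda>p q. S (p * a) * (q * (es x * b))) 1) y"
    by (rule sw_swap)
  also have "\<dots> = sw D (\<lambda>a b. sw D (\<lambda>p q. S (p * a) * q) 1 * (es x * b)) y"
    by (rule sw_cong) (simp add: sw_mult_right mult.assoc)
  also have "\<dots> = sw D (\<lambda>a b. S a * es x * b) y"
    by (rule sw_cong) (simp add: SJ1[symmetric] mult.assoc)
  finally show ?thesis .
qed

lemma es_et_comm: "es a * et b = et b * es a"
proof -
  let ?G = "\<lambda>u v w. s (\<epsilon> (u * b)) (s (\<epsilon> (a * w)) v)"
  have G: "tril s s ?G"
    by (intro trilI lin_scale_const[OF VS] lin_scalar[OF VS] lin_rules)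
  have "es a * et b = sw D (\<lambda>a0 b0. s (\<epsilon> (a * b0)) a0 * et b) 1"
    unfolding es_def by (simp add: sw_mult_right)
  also have "\<dots> = sw D (\<lambda>a0 b0. sw D (\<lambda>a' b'. ?G a' (a0 * b') b0) 1) 1"
    unfolding et_def by (rule sw_cong) (simp add: sw_mult_left ka3 vs_lc[OF VS])
  also have "\<dots> = sw D (\<lambda>a0 c. sw D (\<lambda>x y. ?G x y c) a0) 1" by (rule wc1[OF VS G, symmetric])
  also have "\<dots> = sw D (\<lambda>a0 b0. sw D (\<lambda>a' b'. ?G a0 (b0 * a') b') 1) 1" by (rule wc2[OF VS G])
  also have "\<dots> = sw D (\<lambda>a0 b0. s (\<epsilon> (a0 * b)) b0 * es a) 1"
    unfolding es_def by (rule sw_cong) (simp add: sw_mult_left ka3)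
  also have "\<dots> = et b * es a"
    unfolding et_def by (simp add: sw_mult_right)
  finally show ?thesis .
qed

end

context wha
begin

lemma AM: "S (x * y) = S y * S x"
proof -
  have "S (x * y) = sw D (\<lambda>p q. S (p * (x * y)) * q) 1" by (rule SJ1)
  also have "\<dots> = sw D (\<lambda>p q. (\<lambda>u v. S (u * y) * v) (p * x) q) 1" by (simp add: mult.assoc)
  also have "\<dots> = sw D (\<lambda>a b. (\<lambda>u v. S (u * y) * v) a (et b)) x"
    by (rule J1[OF VS, symmetric]) (intro bilI lin_rules)
  also have "\<dots> = sw D (\<lambda>a b. sw D (\<lambda>u v. S (a * y) * u * S v) b) x"
    by (rule sw_cong) (simp add: ax_t[symmetric] sw_mult_left mult.assoc)
  also have "\<dots> = sw D (\<lambda>r c. sw D (\<lambda>a u. S (a * y) * u * S c) r) x"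
    by (rule coassoc[OF VS, symmetric]) (intro trilI lin_rules)
  also have "\<dots> = sw D (\<lambda>r c. sw D (\<lambda>a u. sw D (\<lambda>P Q. S (a * P) * (u * et Q) * S c) y) r) x"
  proof (rule sw_cong)
    fix r c
    have "sw D (\<lambda>a u. S (a * y) * u * S c) (r * 1) =
       sw D (\<lambda>a u. sw D (\<lambda>p q. S (a * p * y) * (u * q) * S c) 1) r"
      by (rule mult[OF VS]) (intro bilI lin_rules)
    then have "sw D (\<lambda>a u. S (a * y) * u * S c) r =
       sw D (\<lambda>a u. sw D (\<lambda>p q. (\<lambda>P Q. S (a * P) * (u * Q) * S c) (p * y) q) 1) r"
      by (simp add: mult.assoc)
    also have "\<dots> = sw D (\<lambda>a u. sw D (\<lambda>P Q. (\<lambda>P Q. S (a * P) * (u * Q) * S c) P (et Q)) y) r"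
      by (rule sw_cong, rule J1[OF VS, symmetric]) (intro bilI lin_rules)
    finally show "sw D (\<lambda>a u. S (a * y) * u * S c) r =
       sw D (\<lambda>a u. sw D (\<lambda>P Q. S (a * P) * (u * et Q) * S c) y) r" by simp
  qed
  also have "\<dots> = sw D (\<lambda>r c. sw D (\<lambda>a u. sw D (\<lambda>B w. sw D (\<lambda>P v. S (a * P) * (u * v) * S w * S c) B) y) r) x"
  proof (rule sw_cong, rule sw_cong)
    fix r c a u
    have "sw D (\<lambda>P Q. S (a * P) * (u * et Q) * S c) y = sw D (\<lambda>P Q. sw D (\<lambda>v w. S (a * P) * (u * v) * S w * S c) Q) y"
      by (rule sw_cong) (simp add: ax_t[symmetric] sw_mult_left sw_mult_right mult.assoc)
    also have "\<dots> = sw D (\<lambda>B w. sw D (\<lambda>P v. S (a * P) * (u * v) * S w * S c) B) y"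
      by (rule coassoc[OF VS, symmetric]) (intro trilI lin_rules)
    finally show "sw D (\<lambda>P Q. S (a * P) * (u * et Q) * S c) y = sw D (\<lambda>B w. sw D (\<lambda>P v. S (a * P) * (u * v) * S w * S c) B) y" .
  qed
  also have "\<dots> = sw D (\<lambda>r c. sw D (\<lambda>B w. sw D (\<lambda>a u. sw D (\<lambda>P v. S (a * P) * (u * v) * S w * S c) B) r) y) x"
    by (rule sw_cong, rule sw_swap)
  also have "\<dots> = sw D (\<lambda>r c. sw D (\<lambda>B w. es (r * B) * (S w * S c)) y) x"
  proof (rule sw_cong, rule sw_cong)
    fix r c B w
    have "es (r * B) = sw D (\<lambda>a u. S a * u) (r * B)" by (simp add: ax_s)
    also have "\<dots> = sw D (\<lambda>a u. sw D (\<lambda>P v. S (a * P) * (u * v)) B) r"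
      by (rule mult[OF VS]) (intro bilI lin_rules)
    finally show "sw D (\<lambda>a u. sw D (\<lambda>P v. S (a * P) * (u * v) * S w * S c) B) r = es (r * B) * (S w * S c)"
      by (simp add: sw_mult_right mult.assoc)
  qed
  also have "\<dots> = sw D (\<lambda>r c. sw D (\<lambda>B w. sw D (\<lambda>p q. S p * es r * q * S w * S c) B) y) x"
  proof (rule sw_cong, rule sw_cong)
    fix r c B w
    have "es (r * B) = sw D (\<lambda>p q. S p * es r * q) B"
      using es_es[of r B] es_mult[of r B] by simp
    then show "es (r * B) * (S w * S c) = sw D (\<lambda>p q. S p * es r * q * S w * S c) B"
      by (simp add: sw_mult_right mult.assoc)
  qed
  also have "\<dots> = sw D (\<lambda>r c. sw D (\<lambda>p Q. sw D (\<lambda>q w. S p * es r * q * S w * S c) Q) y) x"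
    by (rule sw_cong, rule coassoc[OF VS]) (intro trilI lin_rules)
  also have "\<dots> = sw D (\<lambda>r c. sw D (\<lambda>p Q. S p * et Q * (es r * S c)) y) x"
  proof (rule sw_cong, rule sw_cong)
    fix r c p Q
    have "sw D (\<lambda>q w. S p * es r * q * S w * S c) Q = S p * (es r * et Q) * S c"
      by (simp add: ax_t[symmetric] sw_mult_left sw_mult_right mult.assoc)
    also have "\<dots> = S p * et Q * (es r * S c)" by (simp add: es_et_comm mult.assoc)
    finally show "sw D (\<lambda>q w. S p * es r * q * S w * S c) Q = S p * et Q * (es r * S c)" .
  qed
  also have "\<dots> = sw D (\<lambda>r c. S y * (es r * S c)) x"
  proof (rule sw_cong)
    fix r c
    show "sw D (\<lambda>p Q. S p * et Q * (es r * S c)) y = S y * (es r * S c)"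
      using sw_mult_right[of D "\<lambda>p Q. S p * et Q" y "es r * S c"] S_et[of y] by simp
  qed
  also have "\<dots> = S y * S x"
    using sw_mult_left[of "S y" D "\<lambda>r c. es r * S c" x] S_es[of x] by simp
  finally show ?thesis .
qed

end

context wha
begin

lemma lin_es: "lin s s es"
  unfolding es_def[abs_def] by (intro lin_sw_p[OF VS] lin_scalar[OF VS] lin_rules)
lemma lin_et: "lin s s et"
  unfolding et_def[abs_def] by (intro lin_sw_p[OF VS] lin_scalar[OF VS] lin_rules)
lemma lin_es_c: "lin s s g \<Longrightarrow> lin s s (\<lambda>x. es (g x))"
  by (rule lin_compose[OF _ lin_es])
lemma lin_et_c: "lin s s g \<Longrightarrow> lin s s (\<lambda>x. et (g x))"
  by (rule lin_compose[OF _ lin_et])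

lemmas lin_rules2 = lin_rules lin_es_c lin_et_c

lemma DR:
  assumes vs: "Vector_Spaces.vector_space sV" and F: "bil s sV F"
  shows "sw D (\<lambda>y z. sw D (\<lambda>P Q. sw D (\<lambda>z1 z2. F (P * S z2) (Q * S z1)) z) y) w
       = sw D (\<lambda>p q. F (p * et w) q) 1"
proof -
  have "sw D (\<lambda>y z. sw D (\<lambda>P Q. sw D (\<lambda>z1 z2. F (P * S z2) (Q * S z1)) z) y) w
      = sw D (\<lambda>P t. sw D (\<lambda>Q z. sw D (\<lambda>z1 z2. F (P * S z2) (Q * S z1)) z) t) w"
    by (rule coassoc[OF vs])
      (intro trilI lin_sw_p[OF vs] lin_sw_c[OF vs] bilI bil_lc[OF F] bil_rc[OF F] lin_rules2)
  also have "\<dots> = sw D (\<lambda>P t. sw D (\<lambda>m z2. sw D (\<lambda>Q z1. F (P * S z2) (Q * S z1)) m) t) w"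
    by (rule sw_cong, rule coassoc[OF vs, symmetric])
      (intro trilI lin_sw_p[OF vs] lin_sw_c[OF vs] bilI bil_lc[OF F] bil_rc[OF F] lin_rules2)
  also have "\<dots> = sw D (\<lambda>P t. sw D (\<lambda>m z2. F (P * S z2) (et m)) t) w"
  proof (rule sw_cong, rule sw_cong)
    fix P t m z2
    have l: "lin s sV (\<lambda>z. F (P * S z2) z)" by (intro bil_rc[OF F] lin_rules)
    show "sw D (\<lambda>Q z1. F (P * S z2) (Q * S z1)) m = F (P * S z2) (et m)"
      by (simp add: ax_t[symmetric] sw_lin[OF l])
  qed
  also have "\<dots> = sw D (\<lambda>n z2. sw D (\<lambda>P m. F (P * S z2) (et m)) n) w"
    by (rule coassoc[OF vs, symmetric])
      (intro trilI bil_lc[OF F] bil_rc[OF F] lin_rules2)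
  also have "\<dots> = sw D (\<lambda>n z2. sw D (\<lambda>p q. F (p * n * S z2) q) 1) w"
  proof (rule sw_cong)
    fix n z2
    have b: "bil s sV (\<lambda>A B. F (A * S z2) B)" by (intro bilI bil_lc[OF F] bil_rc[OF F] lin_rules)
    show "sw D (\<lambda>P m. F (P * S z2) (et m)) n = sw D (\<lambda>p q. F (p * n * S z2) q) 1"
      using J1[OF vs b, of n] by simp
  qed
  also have "\<dots> = sw D (\<lambda>p q. sw D (\<lambda>n z2. F (p * n * S z2) q) w) 1"
    by (rule sw_swap)
  also have "\<dots> = sw D (\<lambda>p q. F (p * et w) q) 1"
  proof (rule sw_cong)
    fix p q
    have l: "lin s sV (\<lambda>z. F (p * z) q)" by (intro bil_lc[OF F] lin_rules)
    show "sw D (\<lambda>n z2. F (p * n * S z2) q) w = F (p * et w) q"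
      by (simp add: ax_t[symmetric] sw_lin[OF l] mult.assoc)
  qed
  finally show ?thesis .
qed


lemma Dmult_et:
  assumes vs: "Vector_Spaces.vector_space sV" and F: "bil s sV F"
  shows "sw D F (y * et t) = sw D (\<lambda>A B. F (A * et t) B) y"
proof -
  have b: "bil s sV (\<lambda>A' B'. F (A * A') (B * B'))" for A B
    by (intro bilI bil_lc[OF F] bil_rc[OF F] lin_rules)
  have "sw D F (y * et t) = sw D (\<lambda>A B. sw D (\<lambda>A' B'. F (A * A') (B * B')) (et t)) y"
    by (rule mult[OF vs F])
  also have "\<dots> = sw D (\<lambda>A B. sw D (\<lambda>p q. F (A * (p * et t)) (B * q)) 1) y"
    by (rule sw_cong, rule D_et[OF vs b])
  also have "\<dots> = sw D (\<lambda>A B. sw D (\<lambda>p q. F (A * p * et t) (B * q)) 1) y"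
    by (simp add: mult.assoc)
  also have "\<dots> = sw D (\<lambda>A B. F (A * et t) B) (y * 1)"
    by (rule mult[OF vs, symmetric]) (intro bilI bil_lc[OF F] bil_rc[OF F] lin_rules2)
  finally show ?thesis by simp
qed

lemma ACO:
  assumes vs: "Vector_Spaces.vector_space sV" and F: "bil s sV F"
  shows "sw D F (S x) = sw D (\<lambda>a b. F (S b) (S a)) x"
proof -
  have "sw D (\<lambda>u v. F (S v) (S u)) x = sw D (\<lambda>u v. F (S v) (S u)) (x * 1)" by simp
  also have "\<dots> = sw D (\<lambda>u v. sw D (\<lambda>p q. F (S (v * q)) (S (u * p))) 1) x"
    by (rule mult[OF vs]) (intro bilI bil_lc[OF F] bil_rc[OF F] lin_rules)
  also have "\<dots> = sw D (\<lambda>u v. sw D (\<lambda>p q. F (S q * S v) (S p * S u)) 1) x"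
    by (simp add: AM)
  also have "\<dots> = sw D (\<lambda>u v. sw D (\<lambda>p q. F (p * S v) (q * S u)) 1) x"
  proof (rule sw_cong)
    fix u v
    have b: "bil s sV (\<lambda>p q. F (p * S v) (q * S u))"
      by (intro bilI bil_lc[OF F] bil_rc[OF F] lin_rules)
    show "sw D (\<lambda>p q. F (S q * S v) (S p * S u)) 1 = sw D (\<lambda>p q. F (p * S v) (q * S u)) 1"
      using U[OF vs b] by simp
  qed
  also have "\<dots> = sw D (\<lambda>u v. sw D (\<lambda>a b. sw D (\<lambda>p q. F (p * S v) (q * es a * S b)) 1) u) x"
  proof (rule sw_cong)
    fix u v
    have "sw D (\<lambda>p q. F (p * S v) (q * S u)) 1 = sw D (\<lambda>p q. sw D (\<lambda>a b. F (p * S v) (q * es a * S b)) u) 1"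
    proof (rule sw_cong)
      fix p q
      have l: "lin s sV (\<lambda>z. F (p * S v) (q * z))" by (intro bil_rc[OF F] lin_rules)
      have "F (p * S v) (q * S u) = F (p * S v) (q * sw D (\<lambda>a b. es a * S b) u)"
        using S_es[of u] by simp
      also have "\<dots> = sw D (\<lambda>a b. F (p * S v) (q * es a * S b)) u"
        by (simp add: sw_lin[OF l] mult.assoc)
      finally show "F (p * S v) (q * S u) = sw D (\<lambda>a b. F (p * S v) (q * es a * S b)) u" .
    qed
    also have "\<dots> = sw D (\<lambda>a b. sw D (\<lambda>p q. F (p * S v) (q * es a * S b)) 1) u"
      by (rule sw_swap)
    finally show "sw D (\<lambda>p q. F (p * S v) (q * S u)) 1 = sw D (\<lambda>a b. sw D (\<lambda>p q. F (p * S v) (q * es a * S b)) 1) u" .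
  qed
  also have "\<dots> = sw D (\<lambda>u v. sw D (\<lambda>a b. sw D (\<lambda>P Q. F (P * S v) (Q * S b)) (es a)) u) x"
  proof (rule sw_cong, rule sw_cong)
    fix u v a b
    have b: "bil s sV (\<lambda>P Q. F (P * S v) (Q * S b))"
      by (intro bilI bil_lc[OF F] bil_rc[OF F] lin_rules)
    show "sw D (\<lambda>p q. F (p * S v) (q * es a * S b)) 1 = sw D (\<lambda>P Q. F (P * S v) (Q * S b)) (es a)"
      using D_es[OF vs b, of a] by (simp add: mult.assoc)
  qed
  also have "\<dots> = sw D (\<lambda>a w. sw D (\<lambda>b v. sw D (\<lambda>P Q. F (P * S v) (Q * S b)) (es a)) w) x"
    by (rule coassoc[OF vs])
      (intro trilI lin_sw_p[OF vs] lin_sw_c[OF vs] bilI bil_lc[OF F] bil_rc[OF F] lin_rules2)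
  also have "\<dots> = sw D (\<lambda>a w. sw D (\<lambda>c d. sw D (\<lambda>P1 Q1. sw D (\<lambda>b v. sw D (\<lambda>P2 Q2. F (P1 * P2 * S v) (Q1 * Q2 * S b)) d) w) (S c)) a) x"
  proof (rule sw_cong)
    fix a w
    have "sw D (\<lambda>b v. sw D (\<lambda>P Q. F (P * S v) (Q * S b)) (es a)) w
       = sw D (\<lambda>b v. sw D (\<lambda>c d. sw D (\<lambda>P1 Q1. sw D (\<lambda>P2 Q2. F (P1 * P2 * S v) (Q1 * Q2 * S b)) d) (S c)) a) w"
    proof (rule sw_cong)
      fix b v
      have b: "bil s sV (\<lambda>P Q. F (P * S v) (Q * S b))"
        by (intro bilI bil_lc[OF F] bil_rc[OF F] lin_rules)
      have "sw D (\<lambda>P Q. F (P * S v) (Q * S b)) (es a) = sw D (\<lambda>P Q. F (P * S v) (Q * S b)) (sw D (\<lambda>c d. S c * d) a)"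
        by (simp add: ax_s)
      also have "\<dots> = sw D (\<lambda>c d. sw D (\<lambda>P Q. F (P * S v) (Q * S b)) (S c * d)) a"
        by (rule sw_lin[OF lin_sw[OF vs b]])
      also have "\<dots> = sw D (\<lambda>c d. sw D (\<lambda>P1 Q1. sw D (\<lambda>P2 Q2. F (P1 * P2 * S v) (Q1 * Q2 * S b)) d) (S c)) a"
        by (rule sw_cong) (simp add: mult[OF vs b] mult.assoc)
      finally show "sw D (\<lambda>P Q. F (P * S v) (Q * S b)) (es a) = sw D (\<lambda>c d. sw D (\<lambda>P1 Q1. sw D (\<lambda>P2 Q2. F (P1 * P2 * S v) (Q1 * Q2 * S b)) d) (S c)) a" .
    qed
    also have "\<dots> = sw D (\<lambda>c d. sw D (\<lambda>b v. sw D (\<lambda>P1 Q1. sw D (\<lambda>P2 Q2. F (P1 * P2 * S v) (Q1 * Q2 * S b)) d) (S c)) w) a"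
      by (rule sw_swap)
    also have "\<dots> = sw D (\<lambda>c d. sw D (\<lambda>P1 Q1. sw D (\<lambda>b v. sw D (\<lambda>P2 Q2. F (P1 * P2 * S v) (Q1 * Q2 * S b)) d) w) (S c)) a"
      by (rule sw_cong, rule sw_swap)
    finally show "sw D (\<lambda>b v. sw D (\<lambda>P Q. F (P * S v) (Q * S b)) (es a)) w = sw D (\<lambda>c d. sw D (\<lambda>P1 Q1. sw D (\<lambda>b v. sw D (\<lambda>P2 Q2. F (P1 * P2 * S v) (Q1 * Q2 * S b)) d) w) (S c)) a" .
  qed
  also have "\<dots> = sw D (\<lambda>c t. sw D (\<lambda>d w. sw D (\<lambda>P1 Q1. sw D (\<lambda>b v. sw D (\<lambda>P2 Q2. F (P1 * P2 * S v) (Q1 * Q2 * S b)) d) w) (S c)) t) x"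
    by (rule coassoc[OF vs])
      (intro trilI lin_sw_p[OF vs] lin_sw_c[OF vs] bilI bil_lc[OF F] bil_rc[OF F] lin_rules2)
  also have "\<dots> = sw D (\<lambda>c t. sw D (\<lambda>A B. F (A * et t) B) (S c)) x"
  proof (rule sw_cong)
    fix c t
    have "sw D (\<lambda>d w. sw D (\<lambda>P1 Q1. sw D (\<lambda>b v. sw D (\<lambda>P2 Q2. F (P1 * P2 * S v) (Q1 * Q2 * S b)) d) w) (S c)) t
       = sw D (\<lambda>P1 Q1. sw D (\<lambda>d w. sw D (\<lambda>b v. sw D (\<lambda>P2 Q2. F (P1 * P2 * S v) (Q1 * Q2 * S b)) d) w) t) (S c)"
      by (rule sw_swap)
    also have "\<dots> = sw D (\<lambda>P1 Q1. sw D (\<lambda>p q. F (P1 * p * et t) (Q1 * q)) 1) (S c)"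
    proof (rule sw_cong)
      fix P1 Q1
      have b: "bil s sV (\<lambda>A B. F (P1 * A) (Q1 * B))"
        by (intro bilI bil_lc[OF F] bil_rc[OF F] lin_rules)
      have "sw D (\<lambda>d w. sw D (\<lambda>b v. sw D (\<lambda>P2 Q2. F (P1 * P2 * S v) (Q1 * Q2 * S b)) d) w) t
          = sw D (\<lambda>d w. sw D (\<lambda>b v. sw D (\<lambda>P2 Q2. F (P1 * (P2 * S v)) (Q1 * (Q2 * S b))) d) w) t"
        by (simp add: mult.assoc)
      also have "\<dots> = sw D (\<lambda>d w. sw D (\<lambda>P2 Q2. sw D (\<lambda>b v. F (P1 * (P2 * S v)) (Q1 * (Q2 * S b))) w) d) t"
        by (rule sw_cong, rule sw_swap)
      also have "\<dots> = sw D (\<lambda>p q. F (P1 * (p * et t)) (Q1 * q)) 1"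
        by (rule DR[OF vs b])
      finally show "sw D (\<lambda>d w. sw D (\<lambda>b v. sw D (\<lambda>P2 Q2. F (P1 * P2 * S v) (Q1 * Q2 * S b)) d) w) t
          = sw D (\<lambda>p q. F (P1 * p * et t) (Q1 * q)) 1" by (simp add: mult.assoc)
    qed
    also have "\<dots> = sw D (\<lambda>A B. F (A * et t) B) (S c * 1)"
      by (rule mult[OF vs, symmetric]) (intro bilI bil_lc[OF F] bil_rc[OF F] lin_rules2)
    finally show "sw D (\<lambda>d w. sw D (\<lambda>P1 Q1. sw D (\<lambda>b v. sw D (\<lambda>P2 Q2. F (P1 * P2 * S v) (Q1 * Q2 * S b)) d) w) (S c)) t
       = sw D (\<lambda>A B. F (A * et t) B) (S c)" by simp
  qed
  also have "\<dots> = sw D (\<lambda>c t. sw D F (S c * et t)) x"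
    by (rule sw_cong) (simp add: Dmult_et[OF vs F])
  also have "\<dots> = sw D F (sw D (\<lambda>c t. S c * et t) x)"
    by (rule sw_lin[OF lin_sw[OF vs F], symmetric])
  also have "\<dots> = sw D F (S x)" using S_et[of x] by simp
  finally show ?thesis by simp
qed

end

context wha
begin

lemma ACO3:
  assumes vs: "Vector_Spaces.vector_space sV" and G: "tril s sV G"
  shows "sw D (\<lambda>a c. sw D (\<lambda>x z. G x z c) a) (S y) = sw D (\<lambda>a c. sw D (\<lambda>x z. G (S c) (S z) (S x)) a) y"
proof -
  have b1: "bil s sV (\<lambda>a c. sw D (\<lambda>x z. G x z c) a)"
    by (intro bilI lin_sw_p[OF vs] lin_sw_c[OF vs] bilI trilD1[OF G] trilD2[OF G] trilD3[OF G] lin_rules)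
  have "sw D (\<lambda>a c. sw D (\<lambda>x z. G x z c) a) (S y) = sw D (\<lambda>a b. sw D (\<lambda>x z. G x z (S a)) (S b)) y"
    by (rule ACO[OF vs b1])
  also have "\<dots> = sw D (\<lambda>a b. sw D (\<lambda>x z. G (S z) (S x) (S a)) b) y"
  proof (rule sw_cong)
    fix a b
    have b2: "bil s sV (\<lambda>x z. G x z (S a))"
      by (intro bilI trilD2[OF G] trilD3[OF G])
    show "sw D (\<lambda>x z. G x z (S a)) (S b) = sw D (\<lambda>x z. G (S z) (S x) (S a)) b"
      by (rule ACO[OF vs b2])
  qed
  also have "\<dots> = sw D (\<lambda>r z. sw D (\<lambda>a x. G (S z) (S x) (S a)) r) y"
    by (rule coassoc[OF vs, symmetric])
      (intro trilI lin_compose[OF _ trilD1[OF G]] lin_compose[OF _ trilD2[OF G]] lin_compose[OF _ trilD3[OF G]] lin_rules)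
  finally show ?thesis .
qed

end

locale pr = wha s D \<epsilon> S
  for s :: "'k::field \<Rightarrow> 'h::ring_1 \<Rightarrow> 'h" and D \<epsilon> S +
  fixes sA :: "'k \<Rightarrow> 'a::ring_1 \<Rightarrow> 'a" and \<pi> :: "'h \<Rightarrow> 'a"
  assumes alg: "k_algebra sA" and linpi: "Vector_Spaces.linear s sA \<pi>" and pr: "PR_conditions D S \<pi>"
begin

lemma VSA: "Vector_Spaces.vector_space sA" using alg by (rule ka_vs)
lemma lin_pi: "lin s sA \<pi>" using linpi by (rule linear_lin)
lemma lin_pi_c: "lin s s g \<Longrightarrow> lin s sA (\<lambda>x. \<pi> (g x))" by (rule lin_compose[OF _ lin_pi])
lemma lin_mlA: "lin s sA f \<Longrightarrow> lin s sA (\<lambda>x. u * f x)" by (rule lin_mult_left[OF alg])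
lemma lin_mrA: "lin s sA f \<Longrightarrow> lin s sA (\<lambda>x. f x * u)" by (rule lin_mult_right[OF alg])
lemmas linA = lin_pi_c lin_mlA lin_mrA lin_rules2

lemma PR1: "\<pi> 1 = 1" using pr unfolding PR_conditions_def by blast
lemma PR2: "sw D (\<lambda>x y. \<pi> h * \<pi> x * \<pi> (S y)) k = sw D (\<lambda>x y. \<pi> (h * x) * \<pi> (S y)) k"
  using pr unfolding PR_conditions_def sw_def by blast
lemma PR3: "sw D (\<lambda>x y. \<pi> h * \<pi> (S x) * \<pi> y) k = sw D (\<lambda>x y. \<pi> (h * S x) * \<pi> y) k"
  using pr unfolding PR_conditions_def sw_def by blast
lemma PR4: "sw D (\<lambda>x y. \<pi> x * \<pi> (S y) * \<pi> k) h = sw D (\<lambda>x y. \<pi> x * \<pi> (S y * k)) h"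
  using pr unfolding PR_conditions_def sw_def by blast
lemma PR5: "sw D (\<lambda>x y. \<pi> (S x) * \<pi> y * \<pi> k) h = sw D (\<lambda>x y. \<pi> (S x) * \<pi> (y * k)) h"
  using pr unfolding PR_conditions_def sw_def by blast

definition "e = sw D (\<lambda>a b. \<pi> a * \<pi> (S b)) 1"
definition "f = sw D (\<lambda>a b. \<pi> (S a) * \<pi> b) 1"

lemma bil_pp: "bil s sA (\<lambda>u v. \<pi> u * \<pi> v)" by (intro bilI linA)

lemma Q1: "sw D (\<lambda>a c. sw D (\<lambda>x y. \<pi> x * \<pi> (S y) * \<pi> c) a) h = \<pi> h * e"
proof -
  have "sw D (\<lambda>a c. sw D (\<lambda>x y. \<pi> x * \<pi> (S y) * \<pi> c) a) h = sw D (\<lambda>a c. sw D (\<lambda>x y. \<pi> x * \<pi> (S y * c)) a) h"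
    by (rule sw_cong) (rule PR4)
  also have "\<dots> = sw D (\<lambda>x b. sw D (\<lambda>y z. \<pi> x * \<pi> (S y * z)) b) h"
    by (rule coassoc[OF VSA]) (intro trilI linA)
  also have "\<dots> = sw D (\<lambda>x b. \<pi> x * \<pi> (es b)) h"
    by (rule sw_cong) (simp add: ax_s[symmetric] sw_lin[OF lin_pi] sw_mult_left)
  also have "\<dots> = sw D (\<lambda>p q. \<pi> (h * p) * \<pi> (S q)) 1"
    using I1[OF VSA bil_pp, of h] by simp
  also have "\<dots> = sw D (\<lambda>p q. \<pi> h * \<pi> p * \<pi> (S q)) 1" by (rule PR2[symmetric])
  also have "\<dots> = \<pi> h * e" by (simp add: e_def sw_mult_left mult.assoc)
  finally show ?thesis .
qed

lemma Q3: "sw D (\<lambda>a c. sw D (\<lambda>x y. \<pi> x * \<pi> (S y) * \<pi> c) a) h = f * \<pi> h"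
proof -
  have "sw D (\<lambda>a c. sw D (\<lambda>x y. \<pi> x * \<pi> (S y) * \<pi> c) a) h = sw D (\<lambda>x b. sw D (\<lambda>y z. \<pi> x * \<pi> (S y) * \<pi> z) b) h"
    by (rule coassoc[OF VSA]) (intro trilI linA)
  also have "\<dots> = sw D (\<lambda>x b. sw D (\<lambda>y z. \<pi> (x * S y) * \<pi> z) b) h"
    by (rule sw_cong) (rule PR3)
  also have "\<dots> = sw D (\<lambda>a z. sw D (\<lambda>x y. \<pi> (x * S y) * \<pi> z) a) h"
    by (rule coassoc[OF VSA, symmetric]) (intro trilI linA)
  also have "\<dots> = sw D (\<lambda>a z. \<pi> (et a) * \<pi> z) h"
    by (rule sw_cong) (simp add: ax_t[symmetric] sw_lin[OF lin_pi] sw_mult_right)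
  also have "\<dots> = sw D (\<lambda>p q. \<pi> (S p) * \<pi> (q * h)) 1"
    using I2[OF VSA bil_pp, of h] by simp
  also have "\<dots> = sw D (\<lambda>p q. \<pi> (S p) * \<pi> q * \<pi> h) 1" by (rule PR5[symmetric])
  also have "\<dots> = f * \<pi> h" by (simp add: f_def sw_mult_right)
  finally show ?thesis .
qed

lemma Q4: "sw D (\<lambda>a c. sw D (\<lambda>x y. \<pi> (S x) * \<pi> y * \<pi> (S c)) a) h = e * \<pi> (S h)"
proof -
  have "sw D (\<lambda>a c. sw D (\<lambda>x y. \<pi> (S x) * \<pi> y * \<pi> (S c)) a) h = sw D (\<lambda>x b. sw D (\<lambda>y z. \<pi> (S x) * \<pi> y * \<pi> (S z)) b) h"
    by (rule coassoc[OF VSA]) (intro trilI linA)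
  also have "\<dots> = sw D (\<lambda>x b. sw D (\<lambda>y z. \<pi> (S x * y) * \<pi> (S z)) b) h"
    by (rule sw_cong) (rule PR2)
  also have "\<dots> = sw D (\<lambda>a z. sw D (\<lambda>x y. \<pi> (S x * y) * \<pi> (S z)) a) h"
    by (rule coassoc[OF VSA, symmetric]) (intro trilI linA)
  also have "\<dots> = sw D (\<lambda>a z. \<pi> (es a) * \<pi> (S z)) h"
    by (rule sw_cong) (simp add: ax_s[symmetric] sw_lin[OF lin_pi] sw_mult_right)
  also have "\<dots> = sw D (\<lambda>p q. \<pi> p * \<pi> (S (h * q))) 1"
  proof -
    have b: "bil s sA (\<lambda>u v. \<pi> u * \<pi> (S v))" by (intro bilI linA)
    show ?thesis using J2[OF VSA b, of h] by simp
  qed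
  also have "\<dots> = sw D (\<lambda>p q. \<pi> p * \<pi> (S q * S h)) 1" by (simp add: AM)
  also have "\<dots> = sw D (\<lambda>p q. \<pi> p * \<pi> (S q) * \<pi> (S h)) 1" by (rule PR4[symmetric])
  also have "\<dots> = e * \<pi> (S h)" by (simp add: e_def sw_mult_right)
  finally show ?thesis .
qed

end

lemma inv_lin:
  assumes l: "lin s s S" and b: "bij S"
  shows "lin s s (inv S)"
proof -
  have i: "inv S (S x) = x" for x using b by (simp add: bij_is_inj)
  have j: "S (inv S x) = x" for x using b by (simp add: bij_is_surj surj_f_inv_f)
  show ?thesis unfolding lin_def
  proof (intro conjI allI)
    fix x y
    have "S (inv S x + inv S y) = x + y" using lin_add[OF l] j by simp
    then show "inv S (x + y) = inv S x + inv S y" using i by metis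
  next
    fix c x
    have "S (s c (inv S x)) = s c x" using lin_scale[OF l] j by simp
    then show "inv S (s c x) = s c (inv S x)" using i by metis
  qed
qed

theorem proposition3p2:
  fixes s :: "'k::field \<Rightarrow> 'h::ring_1 \<Rightarrow> 'h"
    and D :: "'h \<Rightarrow> ('h \<times> 'h) list"
    and \<epsilon> :: "'h \<Rightarrow> 'k"
    and S :: "'h \<Rightarrow> 'h"
    and sA :: "'k \<Rightarrow> 'a::ring_1 \<Rightarrow> 'a"
    and \<pi> :: "'h \<Rightarrow> 'a"
  assumes wha: "weak_hopf_algebra s D \<epsilon> S"
    and alg: "k_algebra sA"
    and lin: "Vector_Spaces.linear s sA \<pi>"
    and pr: "PR_conditions D S \<pi>"
  defines "P1 \<equiv> (\<forall>h. \<pi> h = sum_list (map (\<lambda>(x, y, z). \<pi> x * \<pi> (S y) * \<pi> z) (comult2 D h)))"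
    and "P2 \<equiv> (sum_list (map (\<lambda>(a, b). \<pi> a * \<pi> (S b)) (D 1)) = 1)"
    and "P3 \<equiv> (sum_list (map (\<lambda>(a, b). \<pi> (S a) * \<pi> b) (D 1)) = 1)"
    and "P4 \<equiv> (\<forall>h. \<pi> (S h) = sum_list (map (\<lambda>(x, y, z). \<pi> (S x) * \<pi> y * \<pi> (S z)) (comult2 D h)))"
    and "P5 \<equiv> (\<forall>h. \<pi> h = sum_list (map (\<lambda>(x, y, z). \<pi> z * \<pi> (inv S y) * \<pi> x) (comult2 D h)))"
    and "P6 \<equiv> (sum_list (map (\<lambda>(a, b). \<pi> (inv S b) * \<pi> a) (D 1)) = 1)"
    and "P7 \<equiv> (sum_list (map (\<lambda>(a, b). \<pi> b * \<pi> (inv S a)) (D 1)) = 1)"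
  shows "(P1 \<longleftrightarrow> P2) \<and> (P1 \<longleftrightarrow> P3) \<and> (P1 \<longleftrightarrow> P4) \<and>
         (bij S \<longrightarrow> (P1 \<longleftrightarrow> P5) \<and> (P1 \<longleftrightarrow> P6) \<and> (P1 \<longleftrightarrow> P7))"
proof -
  interpret P: pr s D \<epsilon> S sA \<pi>
    by (intro pr.intro wha.intro pr_axioms.intro wha alg lin pr)
  have E1: "P1 \<longleftrightarrow> P.e = 1"
  proof -
    have "P1 \<longleftrightarrow> (\<forall>h. \<pi> h = \<pi> h * P.e)" unfolding P1_def by (simp add: P.c2 P.Q1)
    also have "\<dots> \<longleftrightarrow> P.e = 1"
    proof
      assume "\<forall>h. \<pi> h = \<pi> h * P.e"
      then show "P.e = 1" using P.PR1 by (metis mult_1)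
    qed simp
    finally show ?thesis .
  qed
  have E1': "P1 \<longleftrightarrow> P.f = 1"
  proof -
    have "P1 \<longleftrightarrow> (\<forall>h. \<pi> h = P.f * \<pi> h)" unfolding P1_def by (simp add: P.c2 P.Q3)
    also have "\<dots> \<longleftrightarrow> P.f = 1"
    proof
      assume "\<forall>h. \<pi> h = P.f * \<pi> h"
      then show "P.f = 1" using P.PR1 by (metis mult_1_right)
    qed simp
    finally show ?thesis .
  qed
  have E2: "P2 \<longleftrightarrow> P.e = 1" by (simp add: P2_def P.e_def sw_def)
  have E3: "P3 \<longleftrightarrow> P.f = 1" by (simp add: P3_def P.f_def sw_def)
  have E4: "P4 \<longleftrightarrow> P.e = 1"
  proof -
    have "P4 \<longleftrightarrow> (\<forall>h. \<pi> (S h) = P.e * \<pi> (S h))" unfolding P4_def by (simp add: P.c2 P.Q4)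
    also have "\<dots> \<longleftrightarrow> P.e = 1"
    proof
      assume "\<forall>h. \<pi> (S h) = P.e * \<pi> (S h)"
      then show "P.e = 1" using P.PR1 P.S_one by (metis mult_1_right)
    qed simp
    finally show ?thesis .
  qed
  have B: "(P1 \<longleftrightarrow> P5) \<and> (P1 \<longleftrightarrow> P6) \<and> (P1 \<longleftrightarrow> P7)" if b: "bij S"
  proof -
    have li: "lin s s (inv S)" by (rule inv_lin[OF P.lin_S b])
    have i: "inv S (S x) = x" for x using b by (simp add: bij_is_inj)
    have surj: "\<exists>y. h = S y" for h using b by (metis bij_is_surj surj_f_inv_f)
    have E5: "P5 \<longleftrightarrow> P4"
    proof -
      let ?G = "\<lambda>x z c. \<pi> c * \<pi> (inv S z) * \<pi> x"
      have G: "tril s sA ?G"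
        by (intro trilI P.linA lin_compose[OF _ li] lin_compose[OF lin_compose[OF _ li] P.lin_pi])
      have key: "sw D (\<lambda>a c. sw D (\<lambda>x z. ?G x z c) a) (S y) = sw D (\<lambda>a c. sw D (\<lambda>x z. \<pi> (S x) * \<pi> z * \<pi> (S c)) a) y" for y
        using P.ACO3[OF P.VSA G, of y] by (simp add: i)
      have "P5 \<longleftrightarrow> (\<forall>y. \<pi> (S y) = sw D (\<lambda>a c. sw D (\<lambda>x z. ?G x z c) a) (S y))"
        unfolding P5_def P.c2 using surj by metis
      also have "\<dots> \<longleftrightarrow> P4" unfolding P4_def P.c2 key ..
      finally show ?thesis .
    qed
    have E6: "P6 \<longleftrightarrow> P.e = 1"
    proof -
      have bb: "bil s sA (\<lambda>a b. \<pi> (inv S b) * \<pi> a)"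
        by (intro bilI P.linA lin_compose[OF _ li] lin_compose[OF lin_compose[OF _ li] P.lin_pi])
      have "sw D (\<lambda>a b. \<pi> (inv S b) * \<pi> a) 1 = P.e"
        using P.U[OF P.VSA bb] by (simp add: i P.e_def)
      then show ?thesis by (simp add: P6_def sw_def)
    qed
    have E7: "P7 \<longleftrightarrow> P.f = 1"
    proof -
      have bb: "bil s sA (\<lambda>a b. \<pi> b * \<pi> (inv S a))"
        by (intro bilI P.linA lin_compose[OF _ li] lin_compose[OF lin_compose[OF _ li] P.lin_pi])
      have "sw D (\<lambda>a b. \<pi> b * \<pi> (inv S a)) 1 = P.f"
        using P.U[OF P.VSA bb] by (simp add: i P.f_def)
      then show ?thesis by (simp add: P7_def sw_def)
    qed
    show ?thesis using E1 E1' E4 E5 E6 E7 by blast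
  qed
  show ?thesis using E1 E1' E2 E3 E4 B by blast
qed


end
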